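(* Let $\mathbb F$ be a field of characteristic zero, $G$ a torsion free abelian group and $\mathcal A$ a unital associative $\mathbb F$-algebra. If $\mathcal A^+$ is a Jordan $G$-torus (with grading $\mathcal A^+=\bigoplus_{\sigma\in G}\mathcal A^\sigma$), then $\mathcal A\cong_G(\mathbb F^t[G],\lambda)$ for some $2$-cocycle $\lambda:G\times G\to\mathbb F^\times$ (with respect to the same grading $\mathcal A=\bigoplus_{\sigma}\mathcal A^\sigma$). In particular, if $G$ is free abelian, then $\mathcal A\cong_G(\mathbb F^t[G],\mathbf q)$ for some quantum matrix $\mathbf q$.
   Context: $\mathcal A^+$ is the vector space $\mathcal A$ with the Jordan product $a\circ b=\frac12(ab+ba)$. A $G$-graded algebra $J=\bigoplus_{\sigma\in G}J^\sigma$ is a $G$-torus if $G$ is generated by $\{\sigma\mid J^\sigma\neq0\}$, every nonzero homogeneous element is invertible, and $\dim J^\sigma\le1$ for all $\sigma$. A $2$-cocycle is a map $\lambda:G\times G\to\mathbb F^\times$ with $\lambda(\sigma+\tau,\mu)\lambda(\sigma,\tau)=\lambda(\sigma,\tau+\mu)\lambda(\tau,\mu)$; $(\mathbb F^t[G],\lambda)$ is the algebra with basis $\{x^\sigma\}_{\sigma\in G}$, product $x^\sigma x^\tau=\lambda(\sigma,\tau)x^{\sigma+\tau}$, graded by $\mathbb Fx^\sigma$ in degree $\sigma$. If $G$ is free abelian with basis $\{\sigma_i\}_{i\in I}$ ($I$ totally ordered), a quantum matrix is a matrix $\mathbf q=(q_{ij})_{i,j\in I}$ over $\mathbb F^\times$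 with $q_{ii}=1$, $q_{ij}=q_{ji}^{-1}$, and the quantum torus $(\mathbb F^t[G],\mathbf q)$ is the unital associative algebra generated by $y_i,y_i^{-1}$ ($i\in I$) subject to $y_iy_j=q_{ij}y_jy_i$, $y_iy_i^{-1}=y_i^{-1}y_i=1$, graded by $\deg y_i=\sigma_i$. $\cong_G$ means isomorphism of $G$-graded algebras. *)

theory Defs
  imports Main
begin

definition natmul :: "nat \<Rightarrow> 'g::ab_group_add \<Rightarrow> 'g" where
  "natmul n x = (\<Sum>i<n. x)"

definition zmul :: "int \<Rightarrow> 'g::ab_group_add \<Rightarrow> 'g" where
  "zmul k x = (if 0 \<le> k then natmul (nat k) x else - natmul (nat (- k)) x)"

definition torsion_free :: "'g::ab_group_add itself \<Rightarrow> bool" where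
  "torsion_free _ \<longleftrightarrow> (\<forall>(n::nat) (x::'g). n \<noteq> 0 \<longrightarrow> natmul n x = 0 \<longrightarrow> x = 0)"

definition add_subgroup :: "'g::ab_group_add set \<Rightarrow> bool" where
  "add_subgroup H \<longleftrightarrow> 0 \<in> H \<and> (\<forall>x\<in>H. \<forall>y\<in>H. x + y \<in> H) \<and> (\<forall>x\<in>H. - x \<in> H)"

definition generates_group :: "'g::ab_group_add set \<Rightarrow> bool" where
  "generates_group S \<longleftrightarrow> (\<forall>H. add_subgroup H \<and> S \<subseteq> H \<longrightarrow> H = UNIV)"

definition free_basis :: "('i \<Rightarrow> 'g::ab_group_add) \<Rightarrow> bool" where
  "free_basis b \<longleftrightarrow> (\<forall>g. \<exists>!c :: 'i \<Rightarrow> int. finite {i. c i \<noteq> 0} \<and>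
       g = (\<Sum>i\<in>{i. c i \<noteq> 0}. zmul (c i) (b i)))"

text \<open>The ring structure of 'a (class ring_1, so 1 is distinct from 0) together with a scalar
  multiplication sc makes 'a a unital associative 'k-algebra.\<close>
definition is_algebra :: "('k::field \<Rightarrow> 'a::ring_1 \<Rightarrow> 'a) \<Rightarrow> bool" where
  "is_algebra sc \<longleftrightarrow>
     (\<forall>c x y. sc c (x + y) = sc c x + sc c y) \<and>
     (\<forall>c d x. sc (c + d) x = sc c x + sc d x) \<and>
     (\<forall>c d x. sc (c * d) x = sc c (sc d x)) \<and>
     (\<forall>x. sc 1 x = x) \<and>
     (\<forall>c x y. sc c (x * y) = sc c x * y) \<and>
     (\<forall>c x y. sc c (x * y) = x * sc c y)"

definition subspace_of :: "('k::field \<Rightarrow> 'a::ring_1 \<Rightarrow> 'a) \<Rightarrow> 'a set \<Rightarrow> bool" where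
  "subspace_of sc S \<longleftrightarrow> 0 \<in> S \<and> (\<forall>x\<in>S. \<forall>y\<in>S. x + y \<in> S) \<and> (\<forall>c. \<forall>x\<in>S. sc c x \<in> S)"

definition vs_grading :: "('k::field \<Rightarrow> 'a::ring_1 \<Rightarrow> 'a) \<Rightarrow> ('g \<Rightarrow> 'a set) \<Rightarrow> bool" where
  "vs_grading sc Agr \<longleftrightarrow> (\<forall>\<sigma>. subspace_of sc (Agr \<sigma>)) \<and>
     (\<forall>a. \<exists>!c :: 'g \<Rightarrow> 'a. finite {\<sigma>. c \<sigma> \<noteq> 0} \<and> (\<forall>\<sigma>. c \<sigma> \<in> Agr \<sigma>) \<and>
          a = (\<Sum>\<sigma>\<in>{\<sigma>. c \<sigma> \<noteq> 0}. c \<sigma>))"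

definition jprod :: "('k::field \<Rightarrow> 'a::ring_1 \<Rightarrow> 'a) \<Rightarrow> 'a \<Rightarrow> 'a \<Rightarrow> 'a" where
  "jprod sc a b = sc (inverse 2) (a * b + b * a)"

definition jordan_invertible :: "('k::field \<Rightarrow> 'a::ring_1 \<Rightarrow> 'a) \<Rightarrow> 'a \<Rightarrow> bool" where
  "jordan_invertible sc x \<longleftrightarrow> (\<exists>y. jprod sc x y = 1 \<and> jprod sc (jprod sc x x) y = x)"

definition jordan_grading :: "('k::field \<Rightarrow> 'a::ring_1 \<Rightarrow> 'a) \<Rightarrow> ('g::ab_group_add \<Rightarrow> 'a set) \<Rightarrow> bool" where
  "jordan_grading sc Agr \<longleftrightarrow> vs_grading sc Agr \<and>
     (\<forall>\<sigma> \<tau>. \<forall>x\<in>Agr \<sigma>. \<forall>y\<in>Agr \<tau>. jprod sc x y \<in> Agr (\<sigma> + \<tau>))"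

definition jordan_torus :: "('k::field \<Rightarrow> 'a::ring_1 \<Rightarrow> 'a) \<Rightarrow> ('g::ab_group_add \<Rightarrow> 'a set) \<Rightarrow> bool" where
  "jordan_torus sc Agr \<longleftrightarrow> jordan_grading sc Agr \<and>
     generates_group {\<sigma>. Agr \<sigma> \<noteq> {0}} \<and>
     (\<forall>\<sigma>. \<forall>x\<in>Agr \<sigma>. x \<noteq> 0 \<longrightarrow> jordan_invertible sc x) \<and>
     (\<forall>\<sigma>. \<exists>v. Agr \<sigma> \<subseteq> range (\<lambda>c. sc c v))"

definition fsupp :: "('b \<Rightarrow> 'k::zero) \<Rightarrow> bool" where
  "fsupp f \<longleftrightarrow> finite {x. f x \<noteq> 0}"

definition cocycle :: "('g::ab_group_add \<Rightarrow> 'g \<Rightarrow> 'k::field) \<Rightarrow> bool" where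
  "cocycle lam \<longleftrightarrow> (\<forall>\<sigma> \<tau>. lam \<sigma> \<tau> \<noteq> 0) \<and>
     (\<forall>\<sigma> \<tau> \<mu>. lam (\<sigma> + \<tau>) \<mu> * lam \<sigma> \<tau> = lam \<sigma> (\<tau> + \<mu>) * lam \<tau> \<mu>)"

text \<open>(F^t[G], lam): elements are finitely supported f :: G => F, i.e. sum of f sigma x^sigma\<close>
definition tw_mult :: "('g::ab_group_add \<Rightarrow> 'g \<Rightarrow> 'k::field) \<Rightarrow> ('g \<Rightarrow> 'k) \<Rightarrow> ('g \<Rightarrow> 'k) \<Rightarrow> 'g \<Rightarrow> 'k" where
  "tw_mult lam f g = (\<lambda>\<rho>. \<Sum>\<sigma>\<in>{\<sigma>. f \<sigma> \<noteq> 0}. \<Sum>\<tau>\<in>{\<tau>. g \<tau> \<noteq> 0}.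
       if \<sigma> + \<tau> = \<rho> then lam \<sigma> \<tau> * f \<sigma> * g \<tau> else 0)"

definition graded_iso_twisted :: "('k::field \<Rightarrow> 'a::ring_1 \<Rightarrow> 'a) \<Rightarrow> ('g::ab_group_add \<Rightarrow> 'a set)
    \<Rightarrow> ('g \<Rightarrow> 'g \<Rightarrow> 'k) \<Rightarrow> bool" where
  "graded_iso_twisted sc Agr lam \<longleftrightarrow> (\<exists>\<phi> :: 'a \<Rightarrow> 'g \<Rightarrow> 'k.
     bij_betw \<phi> UNIV {f. fsupp f} \<and>
     (\<forall>a b. \<phi> (a + b) = (\<lambda>\<sigma>. \<phi> a \<sigma> + \<phi> b \<sigma>)) \<and>
     (\<forall>c a. \<phi> (sc c a) = (\<lambda>\<sigma>. c * \<phi> a \<sigma>)) \<and>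
     (\<forall>a b. \<phi> (a * b) = tw_mult lam (\<phi> a) (\<phi> b)) \<and>
     (\<forall>\<sigma>. \<phi> ` Agr \<sigma> = {f. \<forall>\<tau>. \<tau> \<noteq> \<sigma> \<longrightarrow> f \<tau> = 0}))"

definition quantum_matrix :: "('i \<Rightarrow> 'i \<Rightarrow> 'k::field) \<Rightarrow> bool" where
  "quantum_matrix q \<longleftrightarrow> (\<forall>i j. q i j \<noteq> 0) \<and> (\<forall>i. q i i = 1) \<and> (\<forall>i j. q i j = inverse (q j i))"

text \<open>Free unital associative algebra on letters Inl i (= y_i) and Inr i (= y_i^-1):
  finitely supported functions from words to 'k, with concatenation product.\<close>
definition free_mult :: "(('i + 'i) list \<Rightarrow> 'k::field) \<Rightarrow> (('i + 'i) list \<Rightarrow> 'k) \<Rightarrow> ('i + 'i) list \<Rightarrow> 'k" where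
  "free_mult f g = (\<lambda>w. \<Sum>u\<in>{u. f u \<noteq> 0}. \<Sum>v\<in>{v. g v \<noteq> 0}. if u @ v = w then f u * g v else 0)"

definition letter_deg :: "('i \<Rightarrow> 'g::ab_group_add) \<Rightarrow> 'i + 'i \<Rightarrow> 'g" where
  "letter_deg b l = (case l of Inl i \<Rightarrow> b i | Inr i \<Rightarrow> - b i)"

definition word_deg :: "('i \<Rightarrow> 'g::ab_group_add) \<Rightarrow> ('i + 'i) list \<Rightarrow> 'g" where
  "word_deg b w = sum_list (map (letter_deg b) w)"

definition free_deg :: "('i \<Rightarrow> 'g::ab_group_add) \<Rightarrow> 'g \<Rightarrow> (('i + 'i) list \<Rightarrow> 'k::field) set" where
  "free_deg b \<sigma> = {f. fsupp f \<and> (\<forall>w. f w \<noteq> 0 \<longrightarrow> word_deg b w = \<sigma>)}"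

definition qt_relations :: "('i \<Rightarrow> 'i \<Rightarrow> 'k::field) \<Rightarrow> (('i + 'i) list \<Rightarrow> 'k) set" where
  "qt_relations q =
     {(\<lambda>w. (if w = [Inl i, Inl j] then 1 else 0) - (if w = [Inl j, Inl i] then q i j else 0)) | i j. True} \<union>
     {(\<lambda>w. (if w = [Inl i, Inr i] then 1 else 0) - (if w = [] then 1 else 0)) | i. True} \<union>
     {(\<lambda>w. (if w = [Inr i, Inl i] then 1 else 0) - (if w = [] then 1 else 0)) | i. True}"

definition free_ideal :: "(('i + 'i) list \<Rightarrow> 'k::field) set \<Rightarrow> (('i + 'i) list \<Rightarrow> 'k) set" where
  "free_ideal R = \<Inter>{J. J \<subseteq> {f. fsupp f} \<and> R \<subseteq> J \<and> (\<lambda>w. 0) \<in> J \<and>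
       (\<forall>f\<in>J. \<forall>g\<in>J. (\<lambda>w. f w + g w) \<in> J) \<and>
       (\<forall>c. \<forall>f\<in>J. (\<lambda>w. c * f w) \<in> J) \<and>
       (\<forall>f\<in>J. \<forall>g. fsupp g \<longrightarrow> free_mult g f \<in> J \<and> free_mult f g \<in> J)}"

text \<open>The unital algebra homomorphism from the free algebra to A sending y_i to z i and
  y_i^-1 to zi i (every unital homomorphism from the free algebra is of this form)\<close>
definition free_eval :: "('k::field \<Rightarrow> 'a::ring_1 \<Rightarrow> 'a) \<Rightarrow> ('i \<Rightarrow> 'a) \<Rightarrow> ('i \<Rightarrow> 'a)
    \<Rightarrow> (('i + 'i) list \<Rightarrow> 'k) \<Rightarrow> 'a" where
  "free_eval sc z zi f = (\<Sum>w\<in>{w. f w \<noteq> 0}.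
     sc (f w) (prod_list (map (\<lambda>l. case l of Inl i \<Rightarrow> z i | Inr i \<Rightarrow> zi i) w)))"

text \<open>A is isomorphic as G-graded algebra (grading Agr) to the quantum torus (F^t[G], q)
  graded by deg y_i = b i: by the first isomorphism theorem, this means there is a
  surjective unital homomorphism from the free algebra onto A whose kernel is the ideal
  of relations, mapping the degree-sigma part onto Agr sigma.\<close>
definition graded_iso_quantum_torus :: "('k::field \<Rightarrow> 'a::ring_1 \<Rightarrow> 'a) \<Rightarrow> ('g::ab_group_add \<Rightarrow> 'a set)
    \<Rightarrow> ('i \<Rightarrow> 'g) \<Rightarrow> ('i \<Rightarrow> 'i \<Rightarrow> 'k) \<Rightarrow> bool" where
  "graded_iso_quantum_torus sc Agr b q \<longleftrightarrow> (\<exists>z zi :: 'i \<Rightarrow> 'a.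
     free_eval sc z zi ` {f. fsupp f} = UNIV \<and>
     {f. fsupp f \<and> free_eval sc z zi f = 0} = free_ideal (qt_relations q) \<and>
     (\<forall>\<sigma>. free_eval sc z zi ` free_deg b \<sigma> = Agr \<sigma>))"

end

theory Submission
  imports Defs
begin

lemma natmul_0[simp]: "natmul 0 x = 0" by (simp add: natmul_def)
lemma natmul_Suc: "natmul (Suc n) x = x + natmul n x"
  by (simp add: natmul_def add.commute)
lemma natmul_1[simp]: "natmul 1 x = x" by (simp add: natmul_def)
lemma natmul_Suc0[simp]: "natmul (Suc 0) x = x" by (simp add: natmul_def)
lemma natmul_add: "natmul (m + n) x = natmul m x + natmul n x"
  by (induction m) (simp_all add: natmul_Suc add.assoc)
lemma natmul_plus: "natmul n (x + y) = natmul n x + natmul n y"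
  by (induction n) (simp_all add: natmul_Suc algebra_simps)
lemma natmul_zero[simp]: "natmul n 0 = 0"
  by (induction n) (simp_all add: natmul_Suc)
lemma natmul_uminus: "natmul n (- x) = - natmul n x"
  by (induction n) (simp_all add: natmul_Suc algebra_simps)
lemma natmul_mult: "natmul (m * n) x = natmul m (natmul n x)"
  by (induction m) (simp_all add: natmul_Suc natmul_add)

definition iscone :: "'g::ab_group_add set \<Rightarrow> bool" where
  "iscone C \<longleftrightarrow> (\<forall>x\<in>C. \<forall>y\<in>C. x + y \<in> C) \<and> 0 \<notin> C \<and>
     (\<forall>m x. m > 0 \<longrightarrow> natmul m x \<in> C \<longrightarrow> x \<in> C)"

lemma natmul_cone: "(\<forall>x\<in>C. \<forall>y\<in>C. x + y \<in> C) \<Longrightarrow> c \<in> C \<Longrightarrow> k > 0 \<Longrightarrow> natmul k c \<in> C"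
proof (induction k)
  case (Suc k) then show ?case by (cases k) (auto simp: natmul_Suc)
qed simp

lemma cone_extend:
  fixes C :: "'g::ab_group_add set"
  assumes tf: "torsion_free TYPE('g)" and c: "iscone C" and x0: "x \<noteq> 0"
    and xn: "x \<notin> C" and mx: "- x \<notin> C"
  shows "\<exists>D. iscone D \<and> C \<subseteq> D \<and> D \<noteq> C"
proof -
  have add: "\<forall>x\<in>C. \<forall>y\<in>C. x + y \<in> C" and z: "0 \<notin> C"
   and iso: "\<And>m x. m > 0 \<Longrightarrow> natmul m x \<in> C \<Longrightarrow> x \<in> C" using c by (auto simp: iscone_def)
  define C' where "C' = {y. \<exists>c n. (c \<in> C \<or> c = 0) \<and> y = c + natmul n x \<and> (c \<in> C \<or> n > 0)}"
  define D where "D = {y. \<exists>m>0. natmul m y \<in> C'}"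
  have C'add: "a + b \<in> C'" if ha: "a \<in> C'" and hb: "b \<in> C'" for a b
  proof -
    obtain c n where a: "(c \<in> C \<or> c = 0)" "a = c + natmul n x" "(c \<in> C \<or> n > 0)"
      using ha by (auto simp: C'_def)
    obtain c' n' where b: "(c' \<in> C \<or> c' = 0)" "b = c' + natmul n' x" "(c' \<in> C \<or> n' > 0)"
      using hb by (auto simp: C'_def)
    have e: "a + b = (c + c') + natmul (n + n') x" using a b by (simp add: natmul_add algebra_simps)
    have "(c + c' \<in> C \<or> c + c' = 0) \<and> (c + c' \<in> C \<or> n + n' > 0)"
      using a b add by auto
    then show ?thesis unfolding C'_def using e by blast
  qed
  have C'mul: "natmul k a \<in> C'" if "a \<in> C'" "k > 0" for a k
    using that(2)
  proof (induction k)
    case (Suc k) then show ?case using that(1) C'add by (cases k) (auto simp: natmul_Suc)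
  qed simp
  have "iscone D"
    unfolding iscone_def
  proof (intro conjI allI ballI impI)
    fix a b assume "a \<in> D" "b \<in> D"
    then obtain m k where m: "m > 0" "natmul m a \<in> C'" and k: "k > 0" "natmul k b \<in> C'"
      by (auto simp: D_def)
    have "natmul (k * m) (a + b) = natmul k (natmul m a) + natmul m (natmul k b)"
      by (simp add: natmul_plus natmul_mult[symmetric] mult.commute)
    moreover have "natmul k (natmul m a) \<in> C'" "natmul m (natmul k b) \<in> C'"
      using C'mul m k by auto
    ultimately have "natmul (k * m) (a + b) \<in> C'" using C'add by simp
    moreover have "k * m > 0" using m k by simp
    ultimately show "a + b \<in> D" unfolding D_def by blast
  next
    show "0 \<notin> D"
    proof
      assume "0 \<in> D"
      then have "0 \<in> C'" by (auto simp: D_def)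
      then obtain c n where a: "(c \<in> C \<or> c = 0)" "0 = c + natmul n x" "(c \<in> C \<or> n > 0)"
        by (auto simp: C'_def)
      show False
      proof (cases "c \<in> C")
        case True
        then have "n > 0" using a z by (cases n) auto
        have "c = natmul n (- x)" using a(2) by (simp add: natmul_uminus eq_neg_iff_add_eq_0)
        then have "- x \<in> C" using iso[of n "-x"] \<open>n>0\<close> True by simp
        then show False using mx by simp
      next
        case False
        then have "c = 0" "n > 0" using a by auto
        then have "natmul n x = 0" using a by simp
        then show False using tf x0 \<open>n > 0\<close> by (auto simp: torsion_free_def)
      qed
    qed
  next
    fix m a assume "(0::nat) < m" "natmul m a \<in> D"
    then obtain k where "k > 0" "natmul k (natmul m a) \<in> C'" by (auto simp: D_def)
    then show "a \<in> D" unfolding D_def using \<open>0<m\<close> by (auto simp: natmul_mult[symmetric] intro!: exI[of _ "k*m"])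
  qed
  moreover have "C \<subseteq> D"
  proof
    fix a assume "a \<in> C"
    then have "natmul 1 a \<in> C'" unfolding C'_def by (intro CollectI exI[of _ a] exI[of _ 0]) simp
    then show "a \<in> D" unfolding D_def by (auto intro!: exI[of _ 1])
  qed
  moreover have "x \<in> D"
  proof -
    have "natmul 1 x \<in> C'" unfolding C'_def by (intro CollectI exI[of _ 0] exI[of _ 1]) simp
    then show ?thesis unfolding D_def by (auto intro!: exI[of _ 1])
  qed
  ultimately show ?thesis using xn by blast
qed

lemma exists_total_cone:
  fixes dummy :: "'g::ab_group_add itself"
  assumes tf: "torsion_free TYPE('g)"
  shows "\<exists>C::'g set. (\<forall>x\<in>C. \<forall>y\<in>C. x + y \<in> C) \<and> 0 \<notin> C \<and> (\<forall>x. x \<noteq> 0 \<longrightarrow> x \<in> C \<or> - x \<in> C)"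
proof -
  let ?A = "{C::'g set. iscone C}"
  have "\<forall>Ch\<in>chains ?A. \<Union>Ch \<in> ?A"
  proof
    fix Ch assume ch: "Ch \<in> chains ?A"
    then have cones: "\<And>X. X \<in> Ch \<Longrightarrow> iscone X" and chn: "\<And>X Y. X \<in> Ch \<Longrightarrow> Y \<in> Ch \<Longrightarrow> X \<subseteq> Y \<or> Y \<subseteq> X"
      by (auto simp: chains_def chain_subset_def)
    show "\<Union>Ch \<in> ?A" unfolding iscone_def mem_Collect_eq
    proof (intro conjI allI ballI impI)
      fix a b assume "a \<in> \<Union>Ch" "b \<in> \<Union>Ch"
      then obtain X Y where "X \<in> Ch" "Y \<in> Ch" "a \<in> X" "b \<in> Y" by auto
      then show "a + b \<in> \<Union>Ch" using chn[of X Y] cones unfolding iscone_def by blast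
    next
      show "0 \<notin> \<Union>Ch" using cones unfolding iscone_def by blast
    next
      fix m a assume "(0::nat) < m" "natmul m a \<in> \<Union>Ch"
      then show "a \<in> \<Union>Ch" using cones unfolding iscone_def by blast
    qed
  qed
  then obtain M where M: "M \<in> ?A" and max: "\<forall>X\<in>?A. M \<subseteq> X \<longrightarrow> X = M"
    using Zorn_Lemma[of ?A] by blast
  have "\<forall>x. x \<noteq> 0 \<longrightarrow> x \<in> M \<or> - x \<in> M"
  proof (intro allI impI, rule ccontr)
    fix x :: 'g assume "x \<noteq> 0" "\<not> (x \<in> M \<or> - x \<in> M)"
    then obtain D where "iscone D" "M \<subseteq> D" "D \<noteq> M" using cone_extend[OF tf, of M x] M by auto
    then show False using max by auto
  qed
  then show ?thesis using M unfolding iscone_def by blast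
qed

lemma cone_max:
  fixes C :: "'g::ab_group_add set"
  assumes add: "\<forall>x\<in>C. \<forall>y\<in>C. x + y \<in> C" and z: "0 \<notin> C" and tot: "\<forall>x. x \<noteq> 0 \<longrightarrow> x \<in> C \<or> - x \<in> C"
    and fin: "finite P" and ne: "P \<noteq> {}"
  shows "\<exists>m\<in>P. \<forall>p\<in>P. p = m \<or> m - p \<in> C"
  using fin ne
proof (induction P rule: finite_ne_induct)
  case (singleton x) then show ?case by auto
next
  case (insert a P)
  then obtain m where m: "m \<in> P" "\<forall>p\<in>P. p = m \<or> m - p \<in> C" by auto
  show ?case
  proof (cases "a = m")
    case True then show ?thesis using m by auto
  next
    case False
    then have "a - m \<in> C \<or> m - a \<in> C" using tot[rule_format, of "a - m"] by auto
    then show ?thesis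
    proof
      assume am: "a - m \<in> C"
      have "\<forall>p\<in>insert a P. p = a \<or> a - p \<in> C"
      proof
        fix p assume "p \<in> insert a P"
        then show "p = a \<or> a - p \<in> C"
        proof
          assume "p \<in> P" then have "p = m \<or> m - p \<in> C" using m by auto
          then show ?thesis
          proof
            assume "m - p \<in> C" then have "(a - m) + (m - p) \<in> C" using add am by blast
            moreover have "a - p = (a - m) + (m - p)" by simp
            ultimately show ?thesis by metis
          qed (use am in simp)
        qed simp
      qed
      then show ?thesis by auto
    next
      assume "m - a \<in> C" then show ?thesis using m by auto
    qed
  qed
qed

lemma torsion_free_double:
  fixes a b :: "'g::ab_group_add"
  assumes tf: "torsion_free TYPE('g)" and "a + a = b + b" shows "a = b"
proof -
  have "natmul 2 (a - b) = 0" using assms(2) by (simp add: natmul_def numeral_2_eq_2 algebra_simps)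
  then have "a - b = 0" using tf unfolding torsion_free_def by (metis zero_neq_numeral)
  then show ?thesis by simp
qed

lemma extreme_points:
  fixes P :: "'g::ab_group_add set"
  assumes tf: "torsion_free TYPE('g)" and fin: "finite P" and ne: "P \<noteq> {}"
  shows "\<exists>m1\<in>P. \<exists>m2\<in>P. (\<forall>p\<in>P. p = m1 \<or> p = m2) \<longrightarrow> True"
  by (meson ne ex_in_conv)

lemma extreme_main:
  fixes P :: "'g::ab_group_add set"
  assumes tf: "torsion_free TYPE('g)" and fin: "finite P"
    and ext: "\<And>m. m \<in> P \<Longrightarrow> (\<forall>a\<in>P. \<forall>b\<in>P. a + b = m + m \<longrightarrow> a = m \<and> b = m) \<Longrightarrow> m = t"
  shows "P \<subseteq> {t}"
proof (cases "P = {}")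
  case True then show ?thesis by simp
next
  case False
  obtain C :: "'g set" where add: "\<forall>x\<in>C. \<forall>y\<in>C. x + y \<in> C" and z: "0 \<notin> C"
    and tot: "\<forall>x. x \<noteq> 0 \<longrightarrow> x \<in> C \<or> - x \<in> C" using exists_total_cone[OF tf] by blast
  let ?C' = "uminus ` C"
  have add': "\<forall>x\<in>?C'. \<forall>y\<in>?C'. x + y \<in> ?C'"
  proof (intro ballI)
    fix x y assume "x \<in> ?C'" "y \<in> ?C'"
    then obtain a b where "a \<in> C" "b \<in> C" "x = - a" "y = - b" by auto
    then show "x + y \<in> ?C'" using add by (auto intro!: image_eqI[of _ _ "a + b"])
  qed
  have z': "0 \<notin> ?C'" using z by auto
  have tot': "\<forall>x. x \<noteq> 0 \<longrightarrow> x \<in> ?C' \<or> - x \<in> ?C'"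
    using tot by (metis image_eqI minus_minus)
  have extr: "m = t" if "m \<in> P" "\<forall>p\<in>P. p = m \<or> m - p \<in> D" and
     Dadd: "\<forall>x\<in>D. \<forall>y\<in>D. x + y \<in> D" and Dz: "0 \<notin> D" for m D
  proof (rule ext[OF that(1)], intro ballI impI)
    fix a b assume ab: "a \<in> P" "b \<in> P" "a + b = m + m"
    have "a = m"
    proof (rule ccontr)
      assume "a \<noteq> m"
      then have am: "m - a \<in> D" using that(2) ab by auto
      have "b = m \<or> m - b \<in> D" using that(2) ab by auto
      then have "(m + m) - (a + b) \<in> D"
      proof
        assume "b = m" then show ?thesis using am by simp
      next
        assume "m - b \<in> D" then have "(m - a) + (m - b) \<in> D" using Dadd am by auto
        then show ?thesis by (simp add: algebra_simps)
      qed
      then show False using ab Dz by simp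
    qed
    moreover then have "b = m" using ab by simp
    ultimately show "a = m \<and> b = m" by simp
  qed
  obtain m1 where m1: "m1 \<in> P" "\<forall>p\<in>P. p = m1 \<or> m1 - p \<in> C" using cone_max[OF add z tot fin False] by blast
  obtain m2 where m2: "m2 \<in> P" "\<forall>p\<in>P. p = m2 \<or> m2 - p \<in> ?C'" using cone_max[OF add' z' tot' fin False] by blast
  have e1: "m1 = t" using extr[OF m1 add z] .
  have e2: "m2 = t" using extr[OF m2 add' z'] .
  show ?thesis
  proof
    fix p assume p: "p \<in> P"
    show "p \<in> {t}"
    proof (rule ccontr)
      assume "p \<notin> {t}"
      then have "t - p \<in> C" "t - p \<in> ?C'" using m1(2) m2(2) p e1 e2 by auto
      then obtain c where "c \<in> C" "t - p = - c" by auto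
      then have "(t - p) + c \<in> C" using add \<open>t - p \<in> C\<close> by blast
      then show False using z \<open>t - p = - c\<close> by simp
    qed
  qed
qed

lemma inv_from_jordan:
  fixes x y h :: "'a::ring_1"
  assumes hh: "h + h = 1"
    and c1: "x * y + y * x = 1 + 1" and c2: "x * x * y + y * (x * x) = x + x"
  shows "x * y = 1 \<and> y * x = 1"
proof -
  have canc: "u = v" if "u + u = v + v" for u v :: 'a
  proof -
    have "u = (h + h) * u" using hh by simp
    also have "\<dots> = h * (u + u)" by (simp add: distrib_left distrib_right)
    also have "\<dots> = h * (v + v)" using that by simp
    also have "\<dots> = (h + h) * v" by (simp add: distrib_left distrib_right)
    finally show ?thesis using hh by simp
  qed
  have e1: "x * x * y + x * y * x = x + x"
  proof -
    have "x * (x * y + y * x) = x * (1 + 1)" using c1 by simp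
    then show ?thesis by (simp add: distrib_left mult.assoc mult_2_right)
  qed
  have e2: "x * y * x + y * x * x = x + x"
  proof -
    have "(x * y + y * x) * x = (1 + 1) * x" using c1 by simp
    then show ?thesis by (simp add: distrib_right mult.assoc mult_2)
  qed
  have "(x * x * y + x * y * x) + (x * y * x + y * x * x) = (x + x) + (x + x)" using e1 e2 by simp
  then have "(x * y * x + x * y * x) + (x * x * y + y * (x * x)) = (x + x) + (x + x)"
    by (simp add: algebra_simps)
  then have "x * y * x + x * y * x = x + x" using c2 by simp
  then have xyx: "x * y * x = x" using canc by blast
  define e where "e = x * y"
  define f where "f = y * x"
  have ee: "e * e = e"
  proof -
    have "e * e = (x * y * x) * y" by (simp add: e_def mult.assoc)
    then show ?thesis using xyx by (simp add: e_def)
  qed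
  have ff: "f * f = f"
  proof -
    have "f * f = y * (x * y * x)" by (simp add: f_def mult.assoc)
    then show ?thesis using xyx by (simp add: f_def)
  qed
  have ef2: "e + f = 1 + 1" using c1 by (simp add: e_def f_def)
  have "e * (e + f) = e * (1 + 1)" using ef2 by simp
  then have "e * e + e * f = e + e" by (simp add: distrib_left mult_2_right)
  then have ef: "e * f = e" using ee by simp
  have "(e + f) * e = (1 + 1) * e" using ef2 by simp
  then have "e * e + f * e = e + e" by (simp add: distrib_right mult_2)
  then have fe: "f * e = e" using ee by simp
  have "f * (e + f) = f * (1 + 1)" using ef2 by simp
  then have "f * e + f * f = f + f" by (simp add: distrib_left mult_2_right)
  then have "f * e = f" using ff by simp
  then have "e = f" using fe by simp
  then have "e + e = 1 + 1" using ef2 by simp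
  then have "e = 1" using canc by blast
  then show ?thesis using \<open>e = f\<close> by (simp add: e_def f_def)
qed

locale jt =
  fixes sc :: "'k::field_char_0 \<Rightarrow> 'a::ring_1 \<Rightarrow> 'a" and Agr :: "'g::ab_group_add \<Rightarrow> 'a set"
  assumes tf: "torsion_free TYPE('g)" and alg: "is_algebra sc" and tor: "jordan_torus sc Agr"
begin

definition e :: "'k \<Rightarrow> 'a" where "e c = sc c 1"

lemma sc_add: "sc c (x + y) = sc c x + sc c y" using alg by (simp add: is_algebra_def)
lemma sc_addk: "sc (c + d) x = sc c x + sc d x" using alg by (simp add: is_algebra_def)
lemma sc_multk: "sc (c * d) x = sc c (sc d x)" using alg by (simp add: is_algebra_def)
lemma sc_one[simp]: "sc 1 x = x" using alg by (simp add: is_algebra_def)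
lemma sc_l: "sc c (x * y) = sc c x * y" using alg by (simp add: is_algebra_def)
lemma sc_r: "sc c (x * y) = x * sc c y" using alg unfolding is_algebra_def by blast

lemma sc_e: "sc c x = e c * x"
proof -
  have "sc c (1 * x) = sc c 1 * x" by (rule sc_l)
  then show ?thesis by (simp add: e_def)
qed
lemma sc_e': "sc c x = x * e c"
proof -
  have "sc c (x * 1) = x * sc c 1" by (rule sc_r)
  then show ?thesis by (simp add: e_def)
qed
lemma e_central: "e c * x = x * e c" by (simp only: sc_e[symmetric] sc_e'[symmetric])
lemma e_add: "e (c + d) = e c + e d" unfolding e_def by (simp add: sc_addk)
lemma e_mult: "e (c * d) = e c * e d"
proof -
  have "e (c * d) = sc c (e d)" unfolding e_def by (rule sc_multk)
  then show ?thesis by (simp only: sc_e)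
qed
lemma e_1[simp]: "e 1 = 1" unfolding e_def by simp
lemma e_0[simp]: "e 0 = 0"
proof -
  have "e 0 = e 0 + e 0" using e_add[of 0 0] by simp
  then show ?thesis by simp
qed
lemma e_uminus: "e (- c) = - e c"
proof -
  have "e (- c) + e c = 0" using e_add[of "- c" c] by simp
  then show ?thesis by (simp add: eq_neg_iff_add_eq_0)
qed
lemma e_inv: "c \<noteq> 0 \<Longrightarrow> e (inverse c) * e c = 1"
  by (simp only: e_mult[symmetric]) simp

definition h :: 'a where "h = e (inverse 2)"
lemma hh: "h + h = 1"
proof -
  have "h + h = e (inverse 2 + inverse 2)" unfolding h_def by (rule e_add[symmetric])
  moreover have "inverse (2::'k) + inverse 2 = 1" by (simp add: field_simps)
  ultimately show ?thesis by (metis e_1)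
qed

lemma jprod_h: "jprod sc a b = h * (a * b + b * a)"
  by (simp add: jprod_def h_def sc_e)

lemma double_h: "(h * z) + (h * z) = z"
proof -
  have "(h * z) + (h * z) = (h + h) * z" by (simp only: distrib_right)
  then show ?thesis by (simp only: hh mult_1_left)
qed

lemma jprod_sq: "jprod sc a a = a * a"
  by (simp add: jprod_h distrib_left double_h)

lemma canc2: assumes "u + u = v + v" shows "u = (v::'a)"
proof -
  have "h * (u + u) = h * (v + v)" using assms by simp
  then show ?thesis by (simp only: distrib_left double_h)
qed

lemma vsg: "vs_grading sc Agr" and jgr0: "\<forall>\<sigma> \<tau>. \<forall>x\<in>Agr \<sigma>. \<forall>y\<in>Agr \<tau>. jprod sc x y \<in> Agr (\<sigma> + \<tau>)"
  using tor by (auto simp: jordan_torus_def jordan_grading_def)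

lemma jgr: "x \<in> Agr s \<Longrightarrow> y \<in> Agr t \<Longrightarrow> jprod sc x y \<in> Agr (s + t)"
  using jgr0 by blast

lemma sub_zero[simp]: "0 \<in> Agr s" using vsg by (auto simp: vs_grading_def subspace_of_def)
lemma sub_add: "x \<in> Agr s \<Longrightarrow> y \<in> Agr s \<Longrightarrow> x + y \<in> Agr s"
  using vsg by (auto simp: vs_grading_def subspace_of_def)
lemma sub_sc: "x \<in> Agr s \<Longrightarrow> sc c x \<in> Agr s"
  using vsg by (auto simp: vs_grading_def subspace_of_def)
lemma sub_e: "x \<in> Agr s \<Longrightarrow> e c * x \<in> Agr s"
  using sub_sc sc_e by metis
lemma sub_uminus: "x \<in> Agr s \<Longrightarrow> - x \<in> Agr s"
  using sub_e[of x s "-1"] by (simp add: e_uminus)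
lemma sub_diff: "x \<in> Agr s \<Longrightarrow> y \<in> Agr s \<Longrightarrow> x - y \<in> Agr s"
  using sub_add sub_uminus by (metis diff_conv_add_uminus)
lemma sub_sum: "finite I \<Longrightarrow> (\<And>i. i \<in> I \<Longrightarrow> f i \<in> Agr s) \<Longrightarrow> sum f I \<in> Agr s"
  by (induction I rule: finite_induct) (simp_all add: sub_add)
lemma sub_h: "x \<in> Agr s \<Longrightarrow> h * x \<in> Agr s"
  by (simp add: h_def sub_e)

definition P :: "'a \<Rightarrow> ('g \<Rightarrow> 'a) \<Rightarrow> bool" where
  "P a c \<longleftrightarrow> finite {\<sigma>. c \<sigma> \<noteq> 0} \<and> (\<forall>\<sigma>. c \<sigma> \<in> Agr \<sigma>) \<and> a = (\<Sum>\<sigma>\<in>{\<sigma>. c \<sigma> \<noteq> 0}. c \<sigma>)"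

definition comp :: "'a \<Rightarrow> 'g \<Rightarrow> 'a" where "comp a = (THE c. P a c)"

lemma ex1P: "\<exists>!c. P a c" using vsg unfolding vs_grading_def P_def by blast

lemma compP: "P a (comp a)" unfolding comp_def using ex1P by (rule theI')

lemma comp_fin: "finite {\<sigma>. comp a \<sigma> \<noteq> 0}" and comp_in: "comp a s \<in> Agr s"
  and comp_sum: "a = (\<Sum>\<sigma>\<in>{\<sigma>. comp a \<sigma> \<noteq> 0}. comp a \<sigma>)"
  using compP unfolding P_def by auto

lemma comp_uniq: "P a c \<Longrightarrow> comp a = c" using ex1P compP by blast

lemma comp_unique:
  assumes "finite D" "\<And>s. s \<in> D \<Longrightarrow> f s \<in> Agr s"
  shows "comp (\<Sum>s\<in>D. f s) t = (if t \<in> D then f t else 0)"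
proof -
  define c where "c s = (if s \<in> D then f s else 0)" for s
  have sub: "{s. c s \<noteq> 0} \<subseteq> D" by (auto simp: c_def split: if_splits)
  have "P (\<Sum>s\<in>D. f s) c"
    unfolding P_def
  proof (intro conjI allI)
    show "finite {s. c s \<noteq> 0}" using sub assms(1) finite_subset by blast
    show "c s \<in> Agr s" for s using assms(2) by (auto simp: c_def)
    have "(\<Sum>s\<in>D. f s) = (\<Sum>s\<in>D. c s)" by (simp add: c_def)
    also have "\<dots> = (\<Sum>s\<in>{s. c s \<noteq> 0}. c s)"
      by (rule sum.mono_neutral_right[OF assms(1) sub]) auto
    finally show "(\<Sum>s\<in>D. f s) = (\<Sum>s\<in>{s. c s \<noteq> 0}. c s)" .
  qed
  then have "comp (\<Sum>s\<in>D. f s) = c" by (rule comp_uniq)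
  then show ?thesis by (simp add: c_def)
qed

lemma comp_hom: assumes "x \<in> Agr s" shows "comp x t = (if t = s then x else 0)"
proof -
  have "comp (\<Sum>s\<in>{s}. x) t = (if t \<in> {s} then x else 0)"
    by (rule comp_unique) (use assms in auto)
  then show ?thesis by simp
qed

lemma comp_sum_super: assumes "finite D" "{\<sigma>. comp a \<sigma> \<noteq> 0} \<subseteq> D" shows "a = (\<Sum>\<sigma>\<in>D. comp a \<sigma>)"
proof -
  have "(\<Sum>\<sigma>\<in>{\<sigma>. comp a \<sigma> \<noteq> 0}. comp a \<sigma>) = (\<Sum>\<sigma>\<in>D. comp a \<sigma>)"
    by (rule sum.mono_neutral_left[OF assms]) auto
  then show ?thesis using comp_sum[of a] by simp
qed

lemma comp_add: "comp (x + y) t = comp x t + comp y t"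
proof -
  let ?D = "{\<sigma>. comp x \<sigma> \<noteq> 0} \<union> {\<sigma>. comp y \<sigma> \<noteq> 0}"
  have fin: "finite ?D" using comp_fin by auto
  have ex: "x = (\<Sum>s\<in>?D. comp x s)" by (rule comp_sum_super[OF fin]) auto
  have ey: "y = (\<Sum>s\<in>?D. comp y s)" by (rule comp_sum_super[OF fin]) auto
  have s: "x + y = (\<Sum>s\<in>?D. comp x s + comp y s)"
    unfolding sum.distrib using ex ey by metis
  have c: "comp (\<Sum>s\<in>?D. comp x s + comp y s) t = (if t \<in> ?D then comp x t + comp y t else 0)"
    by (rule comp_unique[OF fin]) (simp add: comp_in sub_add)
  show ?thesis
  proof (cases "t \<in> ?D")
    case True then show ?thesis using c by (simp only: s) simp
  next
    case False then have "comp x t = 0" "comp y t = 0" by auto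
    then show ?thesis using c False by (simp only: s) simp
  qed
qed

lemma comp_zero[simp]: "comp 0 t = 0"
  using comp_hom[of 0 t t] by simp

lemma comp_sumI: "finite I \<Longrightarrow> comp (\<Sum>i\<in>I. a i) t = (\<Sum>i\<in>I. comp (a i) t)"
  by (induction I rule: finite_induct) (auto simp: comp_add)

lemma comp_sum_gen:
  assumes "finite I" "\<And>i. i \<in> I \<Longrightarrow> a i \<in> Agr (d i)"
  shows "comp (\<Sum>i\<in>I. a i) t = (\<Sum>i\<in>I. if d i = t then a i else 0)"
  unfolding comp_sumI[OF assms(1)] by (rule sum.cong[OF refl]) (simp add: comp_hom assms(2) eq_commute)

lemma in_Agr_iff: "x \<in> Agr s \<longleftrightarrow> (\<forall>t. t \<noteq> s \<longrightarrow> comp x t = 0)"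
proof
  assume "x \<in> Agr s" then show "\<forall>t. t \<noteq> s \<longrightarrow> comp x t = 0" using comp_hom by auto
next
  assume a: "\<forall>t. t \<noteq> s \<longrightarrow> comp x t = 0"
  have "x = (\<Sum>\<sigma>\<in>{s}. comp x \<sigma>)" using a by (intro comp_sum_super) auto
  then have "x = comp x s" by simp
  then show "x \<in> Agr s" using comp_in by metis
qed

lemma Agr_disj: "x \<in> Agr s \<Longrightarrow> x \<in> Agr t \<Longrightarrow> s \<noteq> t \<Longrightarrow> x = 0"
  using comp_hom[of x s t] comp_hom[of x t t] by auto

lemma sum_zero_comp:
  assumes "finite D" "\<And>s. s \<in> D \<Longrightarrow> f s \<in> Agr s" "(\<Sum>s\<in>D. f s) = 0" "t \<in> D"
  shows "f t = 0"
  using comp_unique[OF assms(1,2), of t] assms(3,4) by simp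

end

lemma ring_id: fixes a b :: "'a::ring" shows "(a-b)*(a-b) = (a+b)*(a+b) - ((a*b+b*a)+(a*b+b*a))"
  by (simp add: algebra_simps)

context jt begin

definition invt :: "'a \<Rightarrow> bool" where "invt x \<longleftrightarrow> (\<exists>y. x * y = 1 \<and> y * x = 1)"

lemma invt_mult: "invt x \<Longrightarrow> invt y \<Longrightarrow> invt (x * y)"
proof -
  assume "invt x" "invt y"
  then obtain x' y' where "x * x' = 1" "x' * x = 1" "y * y' = 1" "y' * y = 1" by (auto simp: invt_def)
  then have "(x * y) * (y' * x') = 1" "(y' * x') * (x * y) = 1"
    by (simp_all add: mult.assoc[symmetric]) (simp_all add: mult.assoc)
  then show ?thesis by (auto simp: invt_def)
qed

lemma invt_nz: "invt x \<Longrightarrow> x \<noteq> 0" by (auto simp: invt_def)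

lemma invt_cancel_l: "invt x \<Longrightarrow> x * z = 0 \<Longrightarrow> z = 0"
proof -
  assume "invt x" "x * z = 0"
  then obtain y where "y * x = 1" by (auto simp: invt_def)
  then have "z = (y * x) * z" by simp
  also have "\<dots> = y * (x * z)" by (simp add: mult.assoc)
  finally show ?thesis using \<open>x * z = 0\<close> by simp
qed

lemma invt_cancel_r: "invt x \<Longrightarrow> z * x = 0 \<Longrightarrow> z = 0"
proof -
  assume "invt x" "z * x = 0"
  then obtain y where "x * y = 1" by (auto simp: invt_def)
  then have "z = z * (x * y)" by simp
  also have "\<dots> = (z * x) * y" by (simp add: mult.assoc)
  finally show ?thesis using \<open>z * x = 0\<close> by simp
qed

lemma dbl: "h * z = w \<Longrightarrow> z = w + w"
  using double_h by metis

lemma hom_invt: assumes "x \<in> Agr s" "x \<noteq> 0" shows "invt x"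
proof -
  have "jordan_invertible sc x" using tor assms by (auto simp: jordan_torus_def)
  then obtain y where y1: "jprod sc x y = 1" and y2: "jprod sc (jprod sc x x) y = x"
    by (auto simp: jordan_invertible_def)
  have "x * y + y * x = 1 + 1" using y1 by (intro dbl) (simp add: jprod_h)
  moreover have "x * x * y + y * (x * x) = x + x" using y2 unfolding jprod_sq by (intro dbl) (simp add: jprod_h)
  ultimately show ?thesis using inv_from_jordan[OF hh] by (auto simp: invt_def)
qed

lemma hc: "h * a = a * h" unfolding h_def by (rule e_central)

lemma jprod_add_r: "jprod sc x (a + b) = jprod sc x a + jprod sc x b"
  by (simp add: jprod_h algebra_simps)
lemma jprod_add_l: "jprod sc (a + b) x = jprod sc a x + jprod sc b x"
  by (simp add: jprod_h algebra_simps)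
lemma jprod_0_r[simp]: "jprod sc x 0 = 0" by (simp add: jprod_h)
lemma jprod_0_l[simp]: "jprod sc 0 x = 0" by (simp add: jprod_h)
lemma jprod_sum_r: "jprod sc x (\<Sum>i\<in>I. f i) = (\<Sum>i\<in>I. jprod sc x (f i))"
  by (induction I rule: infinite_finite_induct) (simp_all add: jprod_add_r)
lemma jprod_sum_l: "jprod sc (\<Sum>i\<in>I. f i) x = (\<Sum>i\<in>I. jprod sc (f i) x)"
  by (induction I rule: infinite_finite_induct) (simp_all add: jprod_add_l)
lemma jprod_1: "jprod sc x 1 = x" by (simp add: jprod_h distrib_left double_h)

lemma U_formula: "x * z * x = jprod sc x (jprod sc x z) + jprod sc x (jprod sc x z) - jprod sc (jprod sc x x) z"
proof -
  define w where "w = x * z + z * x"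
  have a: "x * (h * w) = h * (x * w)"
  proof -
    have "x * (h * w) = (x * h) * w" by (simp only: mult.assoc)
    also have "\<dots> = (h * x) * w" by (simp only: hc[of x, symmetric])
    also have "\<dots> = h * (x * w)" by (simp only: mult.assoc)
    finally show ?thesis .
  qed
  have "jprod sc x (jprod sc x z) = h * (x * (h * w) + (h * w) * x)"
    by (simp add: jprod_h w_def)
  also have "\<dots> = h * (h * (x * w + w * x))" by (simp add: a mult.assoc distrib_left)
  also have "x * w + w * x = (x * x * z + z * x * x) + (x * z * x + x * z * x)"
    by (simp add: w_def algebra_simps)
  finally have j: "jprod sc x (jprod sc x z) = h * (h * ((x * x * z + z * x * x) + (x * z * x + x * z * x)))" .
  have "jprod sc x (jprod sc x z) + jprod sc x (jprod sc x z) = h * ((x * x * z + z * x * x) + (x * z * x + x * z * x))"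
    unfolding j by (rule double_h)
  also have "\<dots> = h * (x * x * z + z * x * x) + x * z * x" by (simp add: distrib_left double_h)
  also have "h * (x * x * z + z * x * x) = jprod sc (jprod sc x x) z" by (simp add: jprod_sq jprod_h mult.assoc)
  finally show ?thesis by simp
qed

lemma U_grad: "x \<in> Agr s \<Longrightarrow> z \<in> Agr t \<Longrightarrow> x * z * x \<in> Agr (s + s + t)"
proof -
  assume x: "x \<in> Agr s" and z: "z \<in> Agr t"
  have "jprod sc x (jprod sc x z) \<in> Agr (s + (s + t))" using x z jgr by blast
  then have a: "jprod sc x (jprod sc x z) \<in> Agr (s + s + t)" by (simp add: add.assoc)
  have b: "jprod sc (jprod sc x x) z \<in> Agr (s + s + t)" using x z jgr by blast
  show ?thesis unfolding U_formula using a b by (intro sub_diff sub_add)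
qed

lemma one_grad: "1 \<in> Agr 0"
proof -
  define D where "D = {\<sigma>. comp 1 \<sigma> \<noteq> 0}"
  have fD: "finite D" using comp_fin D_def by simp
  have one: "1 = (\<Sum>\<rho>\<in>D. comp 1 \<rho>)" using comp_sum D_def by simp
  have z: "jprod sc x (comp 1 r) = 0" if x: "x \<in> Agr s" and r: "r \<in> D" "r \<noteq> 0" for x s r
  proof -
    have "x = jprod sc x 1" by (simp add: jprod_1)
    also have "\<dots> = (\<Sum>\<rho>\<in>D. jprod sc x (comp 1 \<rho>))" by (subst one) (rule jprod_sum_r)
    finally have xe: "x = (\<Sum>\<rho>\<in>D. jprod sc x (comp 1 \<rho>))" .
    have "comp (\<Sum>\<rho>\<in>D. jprod sc x (comp 1 \<rho>)) (s + r) = (\<Sum>\<rho>\<in>D. if s + \<rho> = s + r then jprod sc x (comp 1 \<rho>) else 0)"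
      by (rule comp_sum_gen[OF fD]) (simp add: jgr x comp_in)
    also have "\<dots> = (\<Sum>\<rho>\<in>D. if \<rho> = r then jprod sc x (comp 1 \<rho>) else 0)" by simp
    also have "\<dots> = jprod sc x (comp 1 r)" using r fD by simp
    finally have "comp x (s + r) = jprod sc x (comp 1 r)" using xe by simp
    moreover have "comp x (s + r) = 0" using comp_hom[OF x, of "s + r"] r by simp
    ultimately show ?thesis by simp
  qed
  have "comp 1 r = 0" if "r \<noteq> 0" for r
  proof (rule ccontr)
    assume nz: "comp 1 r \<noteq> 0"
    then have "r \<in> D" by (simp add: D_def)
    then have "jprod sc (comp 1 r) (comp 1 r) = 0" using z[OF comp_in] that by blast
    then have "comp 1 r * comp 1 r = 0" by (simp add: jprod_sq)
    moreover have "invt (comp 1 r * comp 1 r)" using hom_invt[OF comp_in nz] invt_mult by blast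
    ultimately show False using invt_nz by blast
  qed
  then show ?thesis using in_Agr_iff by blast
qed

lemma inv_grad: assumes x: "x \<in> Agr s" and xy: "x * y = 1" and yx: "y * x = 1" shows "y \<in> Agr (- s)"
proof -
  define D where "D = {\<sigma>. comp y \<sigma> \<noteq> 0}"
  have fD: "finite D" using comp_fin D_def by simp
  have ye: "y = (\<Sum>\<rho>\<in>D. comp y \<rho>)" using comp_sum D_def by simp
  have ix: "invt x" using xy yx by (auto simp: invt_def)
  have "comp y r = 0" if r: "r \<noteq> - s" for r
  proof (cases "r \<in> D")
    case False then show ?thesis by (simp add: D_def)
  next
    case True
    have "x = x * y * x" using xy by simp
    also have "\<dots> = (\<Sum>\<rho>\<in>D. x * comp y \<rho> * x)"
      by (subst ye) (simp add: sum_distrib_left sum_distrib_right)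
    finally have xe: "x = (\<Sum>\<rho>\<in>D. x * comp y \<rho> * x)" .
    have "comp (\<Sum>\<rho>\<in>D. x * comp y \<rho> * x) (s + s + r) = (\<Sum>\<rho>\<in>D. if s + s + \<rho> = s + s + r then x * comp y \<rho> * x else 0)"
      by (rule comp_sum_gen[OF fD]) (simp add: U_grad x comp_in)
    also have "\<dots> = (\<Sum>\<rho>\<in>D. if \<rho> = r then x * comp y \<rho> * x else 0)" by simp
    also have "\<dots> = x * comp y r * x" using True fD by simp
    finally have "comp x (s + s + r) = x * comp y r * x" using xe by simp
    moreover have "s + s + r \<noteq> s" using r by (simp add: add.assoc add_eq_0_iff2 equation_minus_iff)
    then have "comp x (s + s + r) = 0" using comp_hom[OF x, of "s + s + r"] by simp
    ultimately have "x * (comp y r * x) = 0" by (simp add: mult.assoc)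
    then have "comp y r * x = 0" using invt_cancel_l[OF ix] by blast
    then show ?thesis using invt_cancel_r[OF ix] by blast
  qed
  then show ?thesis using in_Agr_iff by blast
qed

lemma square_root_grad:
  assumes uu: "u * u \<in> Agr (t + t)" shows "u \<in> Agr t"
proof -
  define D where "D = {\<sigma>. comp u \<sigma> \<noteq> 0}"
  have fD: "finite D" using comp_fin D_def by simp
  have ue: "u = (\<Sum>\<rho>\<in>D. comp u \<rho>)" using comp_sum D_def by simp
  have "D \<subseteq> {t}"
  proof (rule extreme_main[OF tf fD])
    fix m assume mD: "m \<in> D" and ext: "\<forall>a\<in>D. \<forall>b\<in>D. a + b = m + m \<longrightarrow> a = m \<and> b = m"
    have "u * u = jprod sc u u" by (simp add: jprod_sq)
    also have "\<dots> = jprod sc (\<Sum>a\<in>D. comp u a) (\<Sum>b\<in>D. comp u b)"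
      by (rule arg_cong2[where f="jprod sc"]) (rule ue)+
    also have "\<dots> = (\<Sum>a\<in>D. \<Sum>b\<in>D. jprod sc (comp u a) (comp u b))"
      by (subst jprod_sum_l) (simp add: jprod_sum_r)
    also have "\<dots> = (\<Sum>p\<in>D \<times> D. jprod sc (comp u (fst p)) (comp u (snd p)))"
      by (simp add: sum.cartesian_product split_def)
    finally have ue2: "u * u = (\<Sum>p\<in>D \<times> D. jprod sc (comp u (fst p)) (comp u (snd p)))" .
    have "comp (\<Sum>p\<in>D \<times> D. jprod sc (comp u (fst p)) (comp u (snd p))) (m + m)
       = (\<Sum>p\<in>D \<times> D. if fst p + snd p = m + m then jprod sc (comp u (fst p)) (comp u (snd p)) else 0)"
      by (rule comp_sum_gen) (auto simp: fD jgr comp_in)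
    also have "\<dots> = (\<Sum>p\<in>{(m, m)}. if fst p + snd p = m + m then jprod sc (comp u (fst p)) (comp u (snd p)) else 0)"
      by (rule sum.mono_neutral_right) (use fD mD ext in auto)
    also have "\<dots> = comp u m * comp u m" by (simp add: jprod_sq)
    finally have c1: "comp (u * u) (m + m) = comp u m * comp u m" using ue2 by simp
    have nz: "comp u m \<noteq> 0" using mD D_def by simp
    have "comp u m * comp u m \<noteq> 0"
      using invt_nz invt_mult hom_invt[OF comp_in nz] by blast
    then have "m + m = t + t" using c1 comp_hom[OF uu, of "m + m"] by (auto split: if_splits)
    then show "m = t" using torsion_free_double[OF tf] by blast
  qed
  then have "\<forall>r. r \<noteq> t \<longrightarrow> comp u r = 0" by (auto simp: D_def)
  then show ?thesis using in_Agr_iff by blast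
qed

lemma prod_grad:
  assumes x: "x \<in> Agr s" and y: "y \<in> Agr t" shows "x * y \<in> Agr (s + t)"
proof -
  define S where "S = x * y + y * x"
  define T where "T = x * (y * y) * x + y * (x * x) * y"
  define d where "d = x * y - y * x"
  have S: "S \<in> Agr (s + t)"
  proof -
    have j: "jprod sc x y \<in> Agr (s + t)" by (rule jgr[OF x y])
    have "S = jprod sc x y + jprod sc x y" by (simp add: jprod_h double_h S_def)
    then show ?thesis using sub_add[OF j j] by simp
  qed
  have SS: "S * S \<in> Agr ((s + t) + (s + t))" using jgr[OF S S] by (simp add: jprod_sq)
  have yy: "y * y \<in> Agr (t + t)" using jgr[OF y y] by (simp add: jprod_sq)
  have xx: "x * x \<in> Agr (s + s)" using jgr[OF x x] by (simp add: jprod_sq)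
  have T1: "x * (y * y) * x \<in> Agr ((s + t) + (s + t))" using U_grad[OF x yy] by (simp add: algebra_simps)
  have T2: "y * (x * x) * y \<in> Agr ((s + t) + (s + t))" using U_grad[OF y xx] by (simp add: algebra_simps)
  have T: "T \<in> Agr ((s + t) + (s + t))" unfolding T_def using T1 T2 by (rule sub_add)
  have "d * d = S * S - (T + T)"
  proof -
    have "T = (x * y) * (y * x) + (y * x) * (x * y)" by (simp add: T_def mult.assoc)
    then show ?thesis unfolding d_def S_def using ring_id[of "x * y" "y * x"] by simp
  qed
  then have "d * d \<in> Agr ((s + t) + (s + t))" using SS T by (simp add: sub_diff sub_add)
  then have d: "d \<in> Agr (s + t)" by (rule square_root_grad)
  have "x * y = h * (S + d)"
  proof -
    have "S + d = x * y + x * y" by (simp add: S_def d_def)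
    then show ?thesis by (simp add: distrib_left double_h)
  qed
  then show ?thesis using S d by (simp add: sub_h sub_add)
qed

end

context jt begin

lemma sc_zero_k[simp]: "sc 0 x = 0" by (simp add: sc_e)
lemma sc_zero_v[simp]: "sc c 0 = 0" by (simp add: sc_e)
lemma sc_sum_k: "sc (\<Sum>i\<in>I. c i) x = (\<Sum>i\<in>I. sc (c i) x)"
  by (induction I rule: infinite_finite_induct) (simp_all add: sc_addk)
lemma sc_sum_v: "sc c (\<Sum>i\<in>I. f i) = (\<Sum>i\<in>I. sc c (f i))"
  by (induction I rule: infinite_finite_induct) (simp_all add: sc_add)
lemma e_diff: "e (c - d) = e c - e d"
  using e_add[of c "- d"] e_uminus[of d] by simp

lemma nz_prod: "x \<in> Agr s \<Longrightarrow> x \<noteq> 0 \<Longrightarrow> y \<in> Agr t \<Longrightarrow> y \<noteq> 0 \<Longrightarrow> x * y \<noteq> 0"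
  using hom_invt invt_mult invt_nz by blast

lemma support_all: "Agr s \<noteq> {0}"
proof -
  let ?S = "{\<sigma>. Agr \<sigma> \<noteq> {0}}"
  have mem: "\<sigma> \<in> ?S \<longleftrightarrow> (\<exists>x. x \<in> Agr \<sigma> \<and> x \<noteq> 0)" for \<sigma> using sub_zero by blast
  have "add_subgroup ?S"
    unfolding add_subgroup_def
  proof (intro conjI ballI)
    show "0 \<in> ?S" unfolding mem using one_grad by auto
  next
    fix a b assume "a \<in> ?S" "b \<in> ?S"
    then obtain x y where "x \<in> Agr a" "x \<noteq> 0" "y \<in> Agr b" "y \<noteq> 0" unfolding mem by blast
    then show "a + b \<in> ?S" unfolding mem using prod_grad nz_prod by blast
  next
    fix a assume "a \<in> ?S"
    then obtain x where x: "x \<in> Agr a" "x \<noteq> 0" unfolding mem by blast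
    then obtain y where "x * y = 1" "y * x = 1" using hom_invt by (auto simp: invt_def)
    then have "y \<in> Agr (- a)" "y \<noteq> 0" using inv_grad[OF x(1)] by auto
    then show "- a \<in> ?S" unfolding mem by blast
  qed
  moreover have "generates_group ?S" using tor by (simp add: jordan_torus_def)
  ultimately have "?S = UNIV" unfolding generates_group_def by blast
  then show ?thesis by auto
qed

definition v :: "'g \<Rightarrow> 'a" where "v s = (SOME x. x \<in> Agr s \<and> x \<noteq> 0)"

lemma v_in: "v s \<in> Agr s" and v_nz: "v s \<noteq> 0"
proof -
  have "\<exists>x. x \<in> Agr s \<and> x \<noteq> 0" using support_all sub_zero by blast
  then have "v s \<in> Agr s \<and> v s \<noteq> 0" unfolding v_def by (rule someI_ex)
  then show "v s \<in> Agr s" "v s \<noteq> 0" by auto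
qed

lemma v_span: assumes "x \<in> Agr s" shows "\<exists>c. x = sc c (v s)"
proof -
  have "\<exists>w. Agr s \<subseteq> range (\<lambda>c. sc c w)" using tor unfolding jordan_torus_def by blast
  then obtain w where w: "Agr s \<subseteq> range (\<lambda>c. sc c w)" by blast
  obtain c0 where c0: "v s = sc c0 w" using w v_in by blast
  have "c0 \<noteq> 0" using c0 v_nz by auto
  obtain c1 where c1: "x = sc c1 w" using w assms by blast
  have "sc (c1 * inverse c0) (v s) = sc (c1 * inverse c0 * c0) w" by (simp add: c0 sc_multk)
  also have "\<dots> = x" using \<open>c0 \<noteq> 0\<close> c1 by (simp add: mult.assoc)
  finally show ?thesis by metis
qed

lemma sc_cancel: assumes "z \<noteq> 0" "sc c z = sc d z" shows "c = d"
proof (rule ccontr)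
  assume "c \<noteq> d"
  have "e (c - d) * z = 0" using assms(2) by (simp add: e_diff sc_e algebra_simps)
  then have "e (inverse (c - d)) * (e (c - d) * z) = 0" by simp
  then have "z = 0" using e_inv[of "c - d"] \<open>c \<noteq> d\<close> by (simp add: mult.assoc[symmetric])
  then show False using assms(1) by simp
qed

lemma sc_v_zero_iff: "sc c (v s) = 0 \<longleftrightarrow> c = 0"
  using sc_cancel[OF v_nz, of c s 0] by auto

definition coef :: "'a \<Rightarrow> 'g \<Rightarrow> 'k" where "coef a s = (SOME c. comp a s = sc c (v s))"

lemma comp_coef: "comp a s = sc (coef a s) (v s)"
proof -
  have "\<exists>c. comp a s = sc c (v s)" using v_span comp_in by blast
  then show ?thesis unfolding coef_def by (rule someI_ex)
qed

lemma coef_eqI: "comp a s = sc c (v s) \<Longrightarrow> coef a s = c"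
  using comp_coef sc_cancel v_nz by metis

lemma coef_zero_iff: "coef a s = 0 \<longleftrightarrow> comp a s = 0"
  using comp_coef sc_v_zero_iff by metis

lemma a_repr: "a = (\<Sum>\<sigma>\<in>{\<sigma>. coef a \<sigma> \<noteq> 0}. sc (coef a \<sigma>) (v \<sigma>))"
  using comp_sum[of a] by (simp add: coef_zero_iff comp_coef[symmetric])

lemma coef_add: "coef (a + b) s = coef a s + coef b s"
  by (rule coef_eqI) (simp only: comp_add comp_coef[of a s] comp_coef[of b s] sc_addk)

lemma comp_sc: "comp (sc c a) s = sc c (comp a s)"
proof -
  define D where "D = {\<sigma>. comp a \<sigma> \<noteq> 0}"
  have fD: "finite D" using comp_fin D_def by simp
  have "sc c a = (\<Sum>\<sigma>\<in>D. sc c (comp a \<sigma>))"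
    using comp_sum[of a] by (metis D_def sc_sum_v)
  then have "comp (sc c a) s = (if s \<in> D then sc c (comp a s) else 0)"
    using comp_unique[OF fD, of "\<lambda>\<sigma>. sc c (comp a \<sigma>)"] by (simp add: comp_in sub_sc)
  then show ?thesis by (auto simp: D_def)
qed

lemma coef_sc: "coef (sc c a) s = c * coef a s"
  by (rule coef_eqI) (simp only: comp_sc comp_coef[of a s] sc_multk)

lemma coef_hom: "x \<in> Agr s \<Longrightarrow> t \<noteq> s \<Longrightarrow> coef x t = 0"
  by (simp add: coef_zero_iff comp_hom)

definition lam :: "'g \<Rightarrow> 'g \<Rightarrow> 'k" where "lam s t = (SOME c. v s * v t = sc c (v (s + t)))"

lemma lam_prop: "v s * v t = sc (lam s t) (v (s + t))"
proof -
  have "\<exists>c. v s * v t = sc c (v (s + t))" using v_span prod_grad v_in by blast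
  then show ?thesis unfolding lam_def by (rule someI_ex)
qed

lemma lam_nz: "lam s t \<noteq> 0"
  using lam_prop[of s t] nz_prod[OF v_in v_nz v_in v_nz] by auto

lemma cocycle_lam: "cocycle lam"
  unfolding cocycle_def
proof (intro conjI allI)
  fix s t m
  have "(v s * v t) * v m = sc (lam s t * lam (s + t) m) (v (s + t + m))"
    by (simp add: lam_prop sc_multk flip: sc_l)
  moreover have "v s * (v t * v m) = sc (lam t m * lam s (t + m)) (v (s + (t + m)))"
    by (simp add: lam_prop sc_multk flip: sc_r)
  ultimately have "sc (lam s t * lam (s + t) m) (v (s + t + m)) = sc (lam t m * lam s (t + m)) (v (s + t + m))"
    by (simp add: mult.assoc add.assoc)
  then have "lam s t * lam (s + t) m = lam t m * lam s (t + m)" using sc_cancel v_nz by blast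
  then show "lam (s + t) m * lam s t = lam s (t + m) * lam t m" by (simp add: mult.commute)
qed (rule lam_nz)


lemma coef_fsupp: "fsupp (coef a)"
  unfolding fsupp_def using comp_fin[of a] by (simp add: coef_zero_iff)

lemma coef_inj: assumes "coef a = coef b" shows "a = b"
  using a_repr[of a] a_repr[of b] assms by metis

lemma coef_surj: assumes "fsupp f" shows "\<exists>a. coef a = f"
proof -
  define D where "D = {\<sigma>. f \<sigma> \<noteq> 0}"
  have fD: "finite D" using assms by (simp add: fsupp_def D_def)
  define a where "a = (\<Sum>\<sigma>\<in>D. sc (f \<sigma>) (v \<sigma>))"
  have "coef a t = f t" for t
  proof (rule coef_eqI)
    have "comp a t = (if t \<in> D then sc (f t) (v t) else 0)"
      unfolding a_def by (rule comp_unique[OF fD]) (simp add: sub_sc v_in)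
    then show "comp a t = sc (f t) (v t)" by (auto simp: D_def)
  qed
  then show ?thesis by blast
qed

lemma sc_mult_mult: "sc c x * sc d y = sc (c * d) (x * y)"
proof -
  have "sc c x * sc d y = sc c (x * sc d y)" by (rule sc_l[symmetric])
  also have "x * sc d y = sc d (x * y)" by (rule sc_r[symmetric])
  finally show ?thesis by (simp add: sc_multk)
qed

lemma coef_mult: "coef (a * b) = tw_mult lam (coef a) (coef b)"
proof
  fix r
  define Da where "Da = {\<sigma>. coef a \<sigma> \<noteq> 0}"
  define Db where "Db = {\<sigma>. coef b \<sigma> \<noteq> 0}"
  have fDa: "finite Da" and fDb: "finite Db" using coef_fsupp by (auto simp: fsupp_def Da_def Db_def)
  define W where "W s t = sc (coef a s * coef b t * lam s t) (v (s + t))" for s t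
  have W_in: "W s t \<in> Agr (s + t)" for s t by (simp add: W_def sub_sc v_in)
  have "a * b = (\<Sum>s\<in>Da. sc (coef a s) (v s)) * (\<Sum>t\<in>Db. sc (coef b t) (v t))"
    by (rule arg_cong2[where f="(*)"]) (simp_all only: Da_def Db_def a_repr[symmetric])
  also have "\<dots> = (\<Sum>s\<in>Da. \<Sum>t\<in>Db. sc (coef a s) (v s) * sc (coef b t) (v t))"
    by (subst sum_distrib_right) (simp add: sum_distrib_left)
  also have "\<dots> = (\<Sum>s\<in>Da. \<Sum>t\<in>Db. W s t)"
    by (simp add: W_def sc_mult_mult lam_prop sc_multk mult.assoc)
  finally have ab: "a * b = (\<Sum>s\<in>Da. \<Sum>t\<in>Db. W s t)" .
  have "comp (a * b) r = (\<Sum>s\<in>Da. \<Sum>t\<in>Db. comp (W s t) r)"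
    unfolding ab by (simp add: comp_sumI fDa fDb)
  also have "\<dots> = (\<Sum>s\<in>Da. \<Sum>t\<in>Db. if s + t = r then W s t else 0)"
    by (intro sum.cong refl) (simp only: comp_hom[OF W_in] eq_commute[of r])
  also have "\<dots> = (\<Sum>s\<in>Da. \<Sum>t\<in>Db. sc (if s + t = r then lam s t * coef a s * coef b t else 0) (v r))"
    by (intro sum.cong refl) (auto simp: W_def mult_ac)
  also have "\<dots> = sc (\<Sum>s\<in>Da. \<Sum>t\<in>Db. if s + t = r then lam s t * coef a s * coef b t else 0) (v r)"
    by (simp add: sc_sum_k)
  finally have "coef (a * b) r = (\<Sum>s\<in>Da. \<Sum>t\<in>Db. if s + t = r then lam s t * coef a s * coef b t else 0)"
    by (rule coef_eqI)
  then show "coef (a * b) r = tw_mult lam (coef a) (coef b) r"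
    by (simp add: tw_mult_def Da_def Db_def)
qed

lemma coef_grad: "coef ` Agr s = {f. \<forall>t. t \<noteq> s \<longrightarrow> f t = 0}"
proof
  show "coef ` Agr s \<subseteq> {f. \<forall>t. t \<noteq> s \<longrightarrow> f t = 0}" using coef_hom by auto
next
  show "{f. \<forall>t. t \<noteq> s \<longrightarrow> f t = 0} \<subseteq> coef ` Agr s"
  proof
    fix f :: "'g \<Rightarrow> 'k" assume f: "f \<in> {f. \<forall>t. t \<noteq> s \<longrightarrow> f t = 0}"
    define a where "a = sc (f s) (v s)"
    have a_in: "a \<in> Agr s" by (simp add: a_def sub_sc v_in)
    have "coef a t = f t" for t
    proof (rule coef_eqI)
      show "comp a t = sc (f t) (v t)" using f comp_hom[OF a_in, of t] by (cases "t = s") (auto simp: a_def)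
    qed
    then have "coef a = f" by blast
    then show "f \<in> coef ` Agr s" using a_in by blast
  qed
qed

lemma iso_twisted: "graded_iso_twisted sc Agr lam"
  unfolding graded_iso_twisted_def
proof (intro exI[of _ coef] conjI allI)
  show "bij_betw coef UNIV {f. fsupp f}"
    unfolding bij_betw_def
  proof
    show "inj_on coef UNIV" using coef_inj by (auto intro: inj_onI)
    show "range coef = {f. fsupp f}" using coef_fsupp coef_surj by blast
  qed
  show "coef (a + b) = (\<lambda>\<sigma>. coef a \<sigma> + coef b \<sigma>)" for a b by (rule ext) (rule coef_add)
  show "coef (sc c a) = (\<lambda>\<sigma>. c * coef a \<sigma>)" for c a by (rule ext) (rule coef_sc)
  show "coef (a * b) = tw_mult lam (coef a) (coef b)" for a b by (rule coef_mult)
  show "coef ` Agr s = {f. \<forall>t. t \<noteq> s \<longrightarrow> f t = 0}" for s by (rule coef_grad)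
qed

end

definition dl :: "('i + 'i) list \<Rightarrow> ('i + 'i) list \<Rightarrow> 'k::field" where
  "dl a = (\<lambda>w. if w = a then 1 else 0)"

lemma fsupp_dl: "fsupp (dl a)" unfolding fsupp_def dl_def by (simp add: Collect_conv_if)

lemma fsupp_lin: fixes f g :: "'b \<Rightarrow> 'k::field" assumes "fsupp f" "fsupp g" shows "fsupp (\<lambda>w. f w + c * g w)"
  unfolding fsupp_def
proof (rule finite_subset)
  show "{w. f w + c * g w \<noteq> 0} \<subseteq> {w. f w \<noteq> 0} \<union> {w. g w \<noteq> 0}" by auto
  show "finite ({w. f w \<noteq> 0} \<union> {w. g w \<noteq> 0})" using assms by (simp add: fsupp_def)
qed

lemma fsupp_zero: "fsupp (\<lambda>w. 0)" by (simp add: fsupp_def)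

lemma free_mult_alt:
  fixes f g :: "('i + 'i) list \<Rightarrow> 'k::field"
  assumes ff: "fsupp f" and fg: "fsupp g"
  shows "free_mult f g w = (\<Sum>n\<in>{..length w}. f (take n w) * g (drop n w))"
proof -
  define Sf where "Sf = {u. f u \<noteq> 0}"
  define Sg where "Sg = {u. g u \<noteq> 0}"
  have fSf: "finite Sf" "finite Sg" using ff fg by (auto simp: fsupp_def Sf_def Sg_def)
  define H where "H p = (case p of (u, v) \<Rightarrow> if u @ v = w then f u * g v else 0)" for p
  define SP where "SP = (\<lambda>n. (take n w, drop n w)) ` {..length w}"
  have fSP: "finite SP" by (simp add: SP_def)
  have "free_mult f g w = (\<Sum>u\<in>Sf. \<Sum>v\<in>Sg. H (u, v))"
    by (simp add: free_mult_def Sf_def Sg_def H_def)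
  also have "\<dots> = (\<Sum>p\<in>Sf \<times> Sg. H p)" by (simp add: sum.cartesian_product)
  also have "\<dots> = (\<Sum>p\<in>(Sf \<times> Sg) \<union> SP. H p)"
  proof (rule sum.mono_neutral_left)
    show "finite (Sf \<times> Sg \<union> SP)" using fSf fSP by simp
    show "\<forall>i\<in>Sf \<times> Sg \<union> SP - Sf \<times> Sg. H i = 0"
    proof
      fix p assume "p \<in> Sf \<times> Sg \<union> SP - Sf \<times> Sg"
      then have "f (fst p) = 0 \<or> g (snd p) = 0" by (cases p) (auto simp: Sf_def Sg_def)
      then show "H p = 0" by (cases p) (auto simp: H_def)
    qed
  qed simp
  also have "\<dots> = (\<Sum>p\<in>SP. H p)"
  proof (rule sum.mono_neutral_right)
    show "finite (Sf \<times> Sg \<union> SP)" using fSf fSP by simp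
    show "\<forall>i\<in>Sf \<times> Sg \<union> SP - SP. H i = 0"
    proof
      fix p assume p: "p \<in> Sf \<times> Sg \<union> SP - SP"
      show "H p = 0"
      proof (rule ccontr)
        assume "H p \<noteq> 0"
        then have e: "fst p @ snd p = w" by (auto simp: H_def split: if_splits prod.splits)
        then have "p = (take (length (fst p)) w, drop (length (fst p)) w)" by auto
        moreover have "length (fst p) \<le> length w" using e by auto
        ultimately have "p \<in> SP" unfolding SP_def by auto
        then show False using p by simp
      qed
    qed
  qed simp
  also have "\<dots> = (\<Sum>n\<in>{..length w}. H (take n w, drop n w))"
    unfolding SP_def
  proof (rule sum.reindex[unfolded comp_def])
    show "inj_on (\<lambda>n. (take n w, drop n w)) {..length w}"
    proof (rule inj_onI)
      fix m n assume "m \<in> {..length w}" "n \<in> {..length w}" "(take m w, drop m w) = (take n w, drop n w)"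
      then have "length (take m w) = length (take n w)" by simp
      then show "m = n" using \<open>m \<in> _\<close> \<open>n \<in> _\<close> by simp
    qed
  qed
  also have "\<dots> = (\<Sum>n\<in>{..length w}. f (take n w) * g (drop n w))" by (simp add: H_def)
  finally show ?thesis .
qed

lemma fsupp_free_mult: "fsupp f \<Longrightarrow> fsupp g \<Longrightarrow> fsupp (free_mult f g)"
proof -
  assume ff: "fsupp f" and fg: "fsupp g"
  define Sf where "Sf = {u. f u \<noteq> 0}"
  define Sg where "Sg = {u. g u \<noteq> 0}"
  have fSf: "finite Sf" "finite Sg" using ff fg by (auto simp: fsupp_def Sf_def Sg_def)
  have "{w. free_mult f g w \<noteq> 0} \<subseteq> (\<lambda>p. fst p @ snd p) ` (Sf \<times> Sg)"
  proof
    fix w assume "w \<in> {w. free_mult f g w \<noteq> 0}"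
    then have "(\<Sum>u\<in>Sf. \<Sum>v\<in>Sg. if u @ v = w then f u * g v else 0) \<noteq> 0"
      by (simp add: free_mult_def Sf_def Sg_def)
    then obtain u where "u \<in> Sf" "(\<Sum>v\<in>Sg. if u @ v = w then f u * g v else 0) \<noteq> 0"
      using sum.not_neutral_contains_not_neutral by blast
    then obtain v' where "v' \<in> Sg" "(if u @ v' = w then f u * g v' else 0) \<noteq> 0"
      using sum.not_neutral_contains_not_neutral by blast
    then show "w \<in> (\<lambda>p. fst p @ snd p) ` (Sf \<times> Sg)"
      using \<open>u \<in> Sf\<close> by (auto split: if_splits intro!: image_eqI[of _ _ "(u, v')"])
  qed
  then show ?thesis unfolding fsupp_def using fSf finite_subset by blast
qed

lemma fm_lin_l:
  fixes f g h :: "('i + 'i) list \<Rightarrow> 'k::field"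
  assumes "fsupp f" "fsupp g" "fsupp h"
  shows "free_mult (\<lambda>w. f w + c * g w) h = (\<lambda>w. free_mult f h w + c * free_mult g h w)"
proof
  fix w
  have fs: "fsupp (\<lambda>w. f w + c * g w)" using fsupp_lin[OF assms(1,2)] .
  show "free_mult (\<lambda>w. f w + c * g w) h w = free_mult f h w + c * free_mult g h w"
    unfolding free_mult_alt[OF fs assms(3)] free_mult_alt[OF assms(1,3)] free_mult_alt[OF assms(2,3)]
    by (simp add: algebra_simps sum.distrib sum_distrib_left)
qed

lemma fm_lin_r:
  fixes f g h :: "('i + 'i) list \<Rightarrow> 'k::field"
  assumes "fsupp f" "fsupp g" "fsupp h"
  shows "free_mult h (\<lambda>w. f w + c * g w) = (\<lambda>w. free_mult h f w + c * free_mult h g w)"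
proof
  fix w
  have fs: "fsupp (\<lambda>w. f w + c * g w)" using fsupp_lin[OF assms(1,2)] .
  show "free_mult h (\<lambda>w. f w + c * g w) w = free_mult h f w + c * free_mult h g w"
    unfolding free_mult_alt[OF assms(3) fs] free_mult_alt[OF assms(3,1)] free_mult_alt[OF assms(3,2)]
    by (simp add: algebra_simps sum.distrib sum_distrib_left)
qed

lemma fm_dl: "free_mult (dl a) (dl b) = (dl (a @ b) :: _ \<Rightarrow> 'k::field)"
proof
  fix w
  have "free_mult (dl a) (dl b) w = (\<Sum>n\<in>{..length w}. (dl a (take n w) * dl b (drop n w) :: 'k))"
    by (simp add: free_mult_alt fsupp_dl)
  also have "\<dots> = (\<Sum>n\<in>{..length w}. if n = length a then dl a (take n w) * dl b (drop n w) else 0)"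
    by (intro sum.cong refl) (auto simp: dl_def)
  also have "\<dots> = dl (a @ b) w"
    by (auto simp: dl_def) (metis append_take_drop_id)
  finally show "free_mult (dl a) (dl b) w = (dl (a @ b) w :: 'k)" .
qed

definition idl :: "(('i + 'i) list \<Rightarrow> 'k::field) set \<Rightarrow> bool" where
  "idl J \<longleftrightarrow> J \<subseteq> {f. fsupp f} \<and> (\<lambda>w. 0) \<in> J \<and>
       (\<forall>f\<in>J. \<forall>g\<in>J. (\<lambda>w. f w + g w) \<in> J) \<and>
       (\<forall>c. \<forall>f\<in>J. (\<lambda>w. c * f w) \<in> J) \<and>
       (\<forall>f\<in>J. \<forall>g. fsupp g \<longrightarrow> free_mult g f \<in> J \<and> free_mult f g \<in> J)"

lemma free_ideal_alt: "free_ideal R = \<Inter>{J. idl J \<and> R \<subseteq> J}"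
  unfolding free_ideal_def idl_def by (rule arg_cong[where f=Inter]) blast

locale qctx =
  fixes J :: "(('i + 'i) list \<Rightarrow> 'k::field) set" and q :: "'i \<Rightarrow> 'i \<Rightarrow> 'k"
  assumes idlJ: "idl J" and RJ: "qt_relations q \<subseteq> J" and qnz: "\<And>i j. q i j \<noteq> 0"
begin

lemma J_fsupp: "f \<in> J \<Longrightarrow> fsupp f" using idlJ by (auto simp: idl_def)
lemma J_zero: "(\<lambda>w. 0) \<in> J" using idlJ by (auto simp: idl_def)
lemma J_add: "f \<in> J \<Longrightarrow> g \<in> J \<Longrightarrow> (\<lambda>w. f w + g w) \<in> J" using idlJ by (auto simp: idl_def)
lemma J_sc: "f \<in> J \<Longrightarrow> (\<lambda>w. c * f w) \<in> J" using idlJ by (auto simp: idl_def)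
lemma J_ml: "f \<in> J \<Longrightarrow> fsupp g \<Longrightarrow> free_mult g f \<in> J" using idlJ by (auto simp: idl_def)
lemma J_mr: "f \<in> J \<Longrightarrow> fsupp g \<Longrightarrow> free_mult f g \<in> J" using idlJ by (auto simp: idl_def)
lemma J_lin: "f \<in> J \<Longrightarrow> g \<in> J \<Longrightarrow> (\<lambda>w. f w + c * g w) \<in> J"
  using J_add J_sc[of g c] by blast
lemma J_sum: "finite S \<Longrightarrow> (\<And>s. s \<in> S \<Longrightarrow> F s \<in> J) \<Longrightarrow> (\<lambda>w. \<Sum>s\<in>S. F s w) \<in> J"
proof (induction S rule: finite_induct)
  case empty then show ?case using J_zero by simp
next
  case (insert x S) then show ?case using J_add[of "F x" "\<lambda>w. \<Sum>s\<in>S. F s w"] by simp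
qed

definition eqv :: "('i + 'i) list \<Rightarrow> ('i + 'i) list \<Rightarrow> bool" where
  "eqv a b \<longleftrightarrow> (\<exists>k. k \<noteq> 0 \<and> (\<lambda>w. dl a w - k * dl b w) \<in> J)"

lemma eqv_refl: "eqv a a"
  unfolding eqv_def using J_zero by (intro exI[of _ 1]) simp

lemma eqv_sym: assumes "eqv a b" shows "eqv b a"
proof -
  obtain k where k: "k \<noteq> 0" "(\<lambda>w. dl a w - k * dl b w) \<in> J" using assms by (auto simp: eqv_def)
  have "(\<lambda>w. (- inverse k) * (dl a w - k * dl b w)) \<in> J" using J_sc[OF k(2)] .
  moreover have "(\<lambda>w. (- inverse k) * (dl a w - k * dl b w)) = (\<lambda>w. dl b w - inverse k * dl a w)"
    using k(1) by (auto simp: algebra_simps)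
  ultimately show ?thesis unfolding eqv_def using k(1) by (intro exI[of _ "inverse k"]) simp
qed

lemma eqv_trans: assumes "eqv a b" "eqv b c" shows "eqv a c"
proof -
  obtain k where k: "k \<noteq> 0" "(\<lambda>w. dl a w - k * dl b w) \<in> J" using assms by (auto simp: eqv_def)
  obtain m where m: "m \<noteq> 0" "(\<lambda>w. dl b w - m * dl c w) \<in> J" using assms by (auto simp: eqv_def)
  have "(\<lambda>w. (dl a w - k * dl b w) + k * (dl b w - m * dl c w)) \<in> J" using J_lin[OF k(2) m(2)] .
  moreover have "(\<lambda>w. (dl a w - k * dl b w) + k * (dl b w - m * dl c w)) = (\<lambda>w. dl a w - (k * m) * dl c w)"
    by (auto simp: algebra_simps)
  ultimately show ?thesis unfolding eqv_def using k(1) m(1) by (intro exI[of _ "k * m"]) simp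
qed

lemma eqv_cong: assumes "eqv a b" shows "eqv (u @ a @ v) (u @ b @ v)"
proof -
  obtain k where k: "k \<noteq> 0" "(\<lambda>w. dl a w - k * dl b w) \<in> J" using assms by (auto simp: eqv_def)
  have F: "(\<lambda>w. dl a w - k * dl b w) = (\<lambda>w. dl a w + (- k) * dl b w)" by simp
  have "free_mult (dl u) (free_mult (\<lambda>w. dl a w - k * dl b w) (dl v)) \<in> J"
    using k(2) by (intro J_ml J_mr fsupp_dl fsupp_free_mult) (auto intro: J_fsupp fsupp_dl)
  also have "free_mult (dl u) (free_mult (\<lambda>w. dl a w - k * dl b w) (dl v)) = (\<lambda>w. dl (u @ a @ v) w - k * dl (u @ b @ v) w)"
    unfolding F
    by (simp only: fm_lin_l[OF fsupp_dl fsupp_dl fsupp_dl] fm_dl fm_lin_r[OF fsupp_dl fsupp_dl fsupp_dl]) simp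
  finally show ?thesis unfolding eqv_def using k(1) by blast
qed

lemma eqv_congI: "eqv a b \<Longrightarrow> x = u @ a @ v \<Longrightarrow> y = u @ b @ v \<Longrightarrow> eqv x y"
  using eqv_cong by blast

lemma rel_eqv: "eqv a b \<Longrightarrow> eqv b c \<Longrightarrow> eqv a c" by (rule eqv_trans)

lemma base_ll: "eqv [Inl i, Inl j] [Inl j, Inl i]"
proof -
  have "(\<lambda>w. (if w = [Inl i, Inl j] then 1 else 0) - (if w = [Inl j, Inl i] then q i j else 0)) \<in> J"
    using RJ unfolding qt_relations_def by blast
  moreover have "(\<lambda>w. (if w = [Inl i, Inl j] then 1 else 0) - (if w = [Inl j, Inl i] then q i j else 0))
     = (\<lambda>w. dl [Inl i, Inl j] w - q i j * dl [Inl j, Inl i] w)" by (auto simp: dl_def)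
  ultimately show ?thesis unfolding eqv_def using qnz by auto
qed

lemma base_lr: "eqv [Inl i, Inr i] []"
proof -
  have m: "(\<lambda>w. (if w = [Inl i, Inr i] then 1 else 0) - (if w = [] then 1 else 0)) \<in> J"
    using RJ unfolding qt_relations_def by blast
  have e: "(\<lambda>w. (if w = [Inl i, Inr i] then 1 else 0) - (if w = [] then 1 else 0))
     = (\<lambda>w. dl [Inl i, Inr i] w - 1 * dl [] w)" by (auto simp: dl_def)
  have "(\<lambda>w. dl [Inl i, Inr i] w - 1 * dl [] w) \<in> J" using m unfolding e .
  then show ?thesis unfolding eqv_def by (intro exI[of _ 1]) simp
qed

lemma base_rl: "eqv [Inr i, Inl i] []"
proof -
  have m: "(\<lambda>w. (if w = [Inr i, Inl i] then 1 else 0) - (if w = [] then 1 else 0)) \<in> J"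
    using RJ unfolding qt_relations_def by blast
  have e: "(\<lambda>w. (if w = [Inr i, Inl i] then 1 else 0) - (if w = [] then 1 else 0))
     = (\<lambda>w. dl [Inr i, Inl i] w - 1 * dl [] w)" by (auto simp: dl_def)
  have "(\<lambda>w. dl [Inr i, Inl i] w - 1 * dl [] w) \<in> J" using m unfolding e .
  then show ?thesis unfolding eqv_def by (intro exI[of _ 1]) simp
qed

lemma comm_rr: "eqv [Inr i, Inr j] [Inr j, Inr i]"
proof -
  have 1: "eqv [Inr i, Inr j] [Inr j, Inl j, Inr i, Inr j]"
    by (rule eqv_congI[OF eqv_sym[OF base_rl[of j]], of _ "[]" "[Inr i, Inr j]"]) simp_all
  have 2: "eqv [Inr j, Inl j, Inr i, Inr j] [Inr j, Inr i, Inl i, Inl j, Inr i, Inr j]"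
    by (rule eqv_congI[OF eqv_sym[OF base_rl[of i]], of _ "[Inr j]" "[Inl j, Inr i, Inr j]"]) simp_all
  have 3: "eqv [Inr j, Inr i, Inl i, Inl j, Inr i, Inr j] [Inr j, Inr i, Inl j, Inl i, Inr i, Inr j]"
    by (rule eqv_congI[OF base_ll[of i j], of _ "[Inr j, Inr i]" "[Inr i, Inr j]"]) simp_all
  have 4: "eqv [Inr j, Inr i, Inl j, Inl i, Inr i, Inr j] [Inr j, Inr i, Inl j, Inr j]"
    by (rule eqv_congI[OF base_lr[of i], of _ "[Inr j, Inr i, Inl j]" "[Inr j]"]) simp_all
  have 5: "eqv [Inr j, Inr i, Inl j, Inr j] [Inr j, Inr i]"
    by (rule eqv_congI[OF base_lr[of j], of _ "[Inr j, Inr i]" "[]"]) simp_all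
  show ?thesis using 1 2 3 4 5 eqv_trans by blast
qed

lemma comm_lr: "eqv [Inl i, Inr j] [Inr j, Inl i]"
proof -
  have 1: "eqv [Inl i, Inr j] [Inr j, Inl j, Inl i, Inr j]"
    by (rule eqv_congI[OF eqv_sym[OF base_rl[of j]], of _ "[]" "[Inl i, Inr j]"]) simp_all
  have 2: "eqv [Inr j, Inl j, Inl i, Inr j] [Inr j, Inl i, Inl j, Inr j]"
    by (rule eqv_congI[OF base_ll[of j i], of _ "[Inr j]" "[Inr j]"]) simp_all
  have 3: "eqv [Inr j, Inl i, Inl j, Inr j] [Inr j, Inl i]"
    by (rule eqv_congI[OF base_lr[of j], of _ "[Inr j, Inl i]" "[]"]) simp_all
  show ?thesis using 1 2 3 eqv_trans by blast
qed

lemma comm_letters: "eqv [l, m] [m, l]"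
proof (cases l)
  case (Inl i) note li = this
  show ?thesis
  proof (cases m)
    case (Inl j) then show ?thesis using li base_ll by simp
  next
    case (Inr j) then show ?thesis using li comm_lr by simp
  qed
next
  case (Inr i) note ri = this
  show ?thesis
  proof (cases m)
    case (Inl j) then show ?thesis using ri comm_lr eqv_sym by simp
  next
    case (Inr j) then show ?thesis using ri comm_rr by simp
  qed
qed

lemma comm_word: "eqv (l # w) (w @ [l])"
proof (induction w)
  case Nil then show ?case by (simp add: eqv_refl)
next
  case (Cons m w)
  have 1: "eqv (l # m # w) (m # l # w)"
    by (rule eqv_congI[OF comm_letters[of l m], of _ "[]" w]) simp_all
  have 2: "eqv (m # l # w) (m # (w @ [l]))"
    by (rule eqv_congI[OF Cons.IH, of _ "[m]" "[]"]) simp_all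
  show ?case using 1 2 eqv_trans by simp
qed

end

definition idx :: "'i + 'i \<Rightarrow> 'i" where "idx l = (case l of Inl i \<Rightarrow> i | Inr i \<Rightarrow> i)"
definition ld :: "'i + 'i \<Rightarrow> 'i \<Rightarrow> int" where
  "ld l i = (case l of Inl j \<Rightarrow> if i = j then 1 else 0 | Inr j \<Rightarrow> if i = j then -1 else 0)"
fun ev :: "('i + 'i) list \<Rightarrow> 'i \<Rightarrow> int" where
  "ev [] = (\<lambda>i. 0)"
| "ev (l # w) = (\<lambda>i. ld l i + ev w i)"
definition pw :: "'i \<Rightarrow> int \<Rightarrow> ('i + 'i) list" where
  "pw i k = (if 0 \<le> k then replicate (nat k) (Inl i) else replicate (nat (- k)) (Inr i))"
definition can :: "'i list \<Rightarrow> ('i \<Rightarrow> int) \<Rightarrow> ('i + 'i) list" where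
  "can L e = concat (map (\<lambda>i. pw i (e i)) L)"

lemma ld_other: "i \<noteq> idx l \<Longrightarrow> ld l i = 0"
  by (cases l) (auto simp: ld_def idx_def)

lemma pw_pos: "0 \<le> k \<Longrightarrow> pw j k = replicate (nat k) (Inl j)" by (simp add: pw_def)
lemma pw_neg: "k \<le> 0 \<Longrightarrow> pw j k = replicate (nat (- k)) (Inr j)"
  by (cases "k = 0") (auto simp: pw_def)
lemma pw_0[simp]: "pw j 0 = []" by (simp add: pw_def)

lemma can_zero: "can L (\<lambda>i. 0) = []" by (induction L) (simp_all add: can_def)

lemma ev_fin: "{i. ev w i \<noteq> 0} \<subseteq> idx ` set w"
proof (induction w)
  case (Cons l w)
  show ?case
  proof
    fix i assume "i \<in> {i. ev (l # w) i \<noteq> 0}"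
    then have "ld l i \<noteq> 0 \<or> ev w i \<noteq> 0" by auto
    then show "i \<in> idx ` set (l # w)"
    proof
      assume "ld l i \<noteq> 0" then have "i = idx l" using ld_other[of i l] by auto
      then show ?thesis by simp
    next
      assume "ev w i \<noteq> 0" then have "i \<in> idx ` set w" using Cons.IH by auto
      then show ?thesis by auto
    qed
  qed
qed simp

lemma finite_ev: "finite {i. ev w i \<noteq> 0}"
  by (rule finite_subset[OF ev_fin]) simp

context qctx begin

lemma merge: "eqv (l # pw (idx l) k) (pw (idx l) (k + ld l (idx l)))"
proof (cases l)
  case (Inl j)
  have ld1: "ld l (idx l) = 1" "idx l = j" using Inl by (auto simp: ld_def idx_def)
  show ?thesis
  proof (cases "0 \<le> k")
    case True
    have n: "nat (k + 1) = Suc (nat k)" using True by simp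
    have "l # pw j k = pw j (k + 1)"
      using True Inl by (simp only: pw_pos n) simp
    then show ?thesis using ld1 eqv_refl by simp
  next
    case False
    define m where "m = nat (- k - 1)"
    have n: "nat (- k) = Suc m" using False by (simp add: m_def)
    have pk: "pw j k = Inr j # replicate m (Inr j)" using False
      by (simp add: pw_neg n)
    have pk1: "pw j (k + 1) = replicate m (Inr j)" using False
      by (simp add: pw_neg m_def)
    have "eqv (Inl j # Inr j # replicate m (Inr j)) (replicate m (Inr j))"
      by (rule eqv_congI[OF base_lr[of j], of _ "[]" "replicate m (Inr j)"]) simp_all
    then show ?thesis using ld1 pk pk1 Inl by simp
  qed
next
  case (Inr j)
  have ld1: "ld l (idx l) = -1" "idx l = j" using Inr by (auto simp: ld_def idx_def)
  show ?thesis
  proof (cases "k \<le> 0")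
    case True
    have n: "nat (- (k - 1)) = Suc (nat (- k))" using True by simp
    have "l # pw j k = pw j (k - 1)"
      using True Inr by (simp only: pw_neg n) simp
    then show ?thesis using ld1 eqv_refl by simp
  next
    case False
    define m where "m = nat (k - 1)"
    have n: "nat k = Suc m" using False by (simp add: m_def)
    have pk: "pw j k = Inl j # replicate m (Inl j)" using False
      by (simp add: pw_pos n)
    have pk1: "pw j (k - 1) = replicate m (Inl j)" using False
      by (simp add: pw_pos m_def)
    have "eqv (Inr j # Inl j # replicate m (Inl j)) (replicate m (Inl j))"
      by (rule eqv_congI[OF base_rl[of j], of _ "[]" "replicate m (Inl j)"]) simp_all
    then show ?thesis using ld1 pk pk1 Inr by simp
  qed
qed

lemma step: "distinct L \<Longrightarrow> idx l \<in> set L \<Longrightarrow> eqv (l # can L e) (can L (\<lambda>i. e i + ld l i))"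
proof (induction L)
  case Nil then show ?case by simp
next
  case (Cons i L)
  let ?e' = "\<lambda>i. e i + ld l i"
  show ?case
  proof (cases "i = idx l")
    case True
    then have nin: "idx l \<notin> set L" using Cons.prems by simp
    have z: "ld l x = 0" if "x \<in> set L" for x using that nin ld_other[of x l] by auto
    have "can L e = can L ?e'"
      unfolding can_def by (intro arg_cong[where f=concat] map_cong) (auto simp: z)
    moreover have "eqv (l # pw i (e i) @ can L e) (pw i (e i + ld l i) @ can L e)"
      by (rule eqv_congI[OF merge[of l "e i"], of _ "[]" "can L e"]) (simp_all add: True)
    ultimately show ?thesis by (simp add: can_def)
  next
    case False
    then have inL: "idx l \<in> set L" using Cons.prems by simp
    have IH: "eqv (l # can L e) (can L ?e')" using Cons inL by simp
    have 1: "eqv (l # pw i (e i) @ can L e) (pw i (e i) @ [l] @ can L e)"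
      by (rule eqv_congI[OF comm_word[of l "pw i (e i)"], of _ "[]" "can L e"]) simp_all
    have 2: "eqv (pw i (e i) @ [l] @ can L e) (pw i (e i) @ can L ?e')"
      by (rule eqv_congI[OF IH, of _ "pw i (e i)" "[]"]) simp_all
    have "ld l i = 0" using False ld_other[of i l] by simp
    then show ?thesis using eqv_trans[OF 1 2] by (simp add: can_def)
  qed
qed

lemma word_can: "distinct L \<Longrightarrow> idx ` set w \<subseteq> set L \<Longrightarrow> eqv w (can L (ev w))"
proof (induction w)
  case Nil then show ?case by (simp add: can_zero eqv_refl)
next
  case (Cons l w)
  have 1: "eqv (l # w) (l # can L (ev w))"
    by (rule eqv_congI[OF Cons.IH, of _ "[l]" "[]"]) (use Cons.prems in simp_all)
  have 2: "eqv (l # can L (ev w)) (can L (\<lambda>i. ev w i + ld l i))"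
    by (rule step) (use Cons.prems in auto)
  have "(\<lambda>i. ev w i + ld l i) = ev (l # w)" by (auto simp: add.commute)
  then show ?case using eqv_trans[OF 1 2] by simp
qed

lemma same_ev: assumes "ev w1 = ev w2" shows "eqv w1 w2"
proof -
  obtain L where L: "set L = idx ` set w1 \<union> idx ` set w2" "distinct L"
    using finite_distinct_list[of "idx ` set w1 \<union> idx ` set w2"] by auto
  have "eqv w1 (can L (ev w1))" using word_can L by auto
  moreover have "eqv w2 (can L (ev w2))" using word_can L by auto
  ultimately show ?thesis using assms eqv_sym[of w2 "can L (ev w2)"] eqv_trans[of w1 "can L (ev w1)" w2] by simp
qed

end

lemma zmul_0[simp]: "zmul 0 x = 0" by (simp add: zmul_def)

lemma zmul_succ: "zmul (k + 1) x = zmul k x + x"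
proof (cases "0 \<le> k")
  case True
  then have "nat (k + 1) = Suc (nat k)" by simp
  then show ?thesis using True by (simp add: zmul_def natmul_Suc add.commute)
next
  case False
  show ?thesis
  proof (cases "k = -1")
    case True then show ?thesis by (simp add: zmul_def)
  next
    case False2: False
    then have "nat (- k) = Suc (nat (- (k + 1)))" using False by simp
    then show ?thesis using False False2 by (simp add: zmul_def natmul_Suc algebra_simps)
  qed
qed

lemma zmul_pred: "zmul (k - 1) x = zmul k x - x"
  using zmul_succ[of "k - 1" x] by simp


definition Lin :: "('i \<Rightarrow> 'g::ab_group_add) \<Rightarrow> ('i \<Rightarrow> int) \<Rightarrow> 'g" where
  "Lin b e = (\<Sum>i\<in>{i. e i \<noteq> 0}. zmul (e i) (b i))"

lemma Lin_super: "finite S \<Longrightarrow> {i. e i \<noteq> 0} \<subseteq> S \<Longrightarrow> Lin b e = (\<Sum>i\<in>S. zmul (e i) (b i))"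
  unfolding Lin_def by (rule sum.mono_neutral_left) auto

lemma word_deg_cons: "word_deg b (l # w) = letter_deg b l + word_deg b w"
  by (simp add: word_deg_def)

lemma word_deg_ev: "word_deg b w = Lin b (ev w)"
proof (induction w)
  case Nil then show ?case by (simp add: word_deg_def Lin_def)
next
  case (Cons l w)
  define S where "S = idx ` set (l # w)"
  have fS: "finite S" by (simp add: S_def)
  have s1: "{i. ev (l # w) i \<noteq> 0} \<subseteq> S" using ev_fin[of "l # w"] unfolding S_def by simp
  have s2: "{i. ev w i \<noteq> 0} \<subseteq> S" using ev_fin[of w] unfolding S_def by auto
  have tm: "zmul (ld l i + ev w i) (b i) = (if i = idx l then letter_deg b l else 0) + zmul (ev w i) (b i)" for i
  proof (cases "i = idx l")
    case True
    show ?thesis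
    proof (cases l)
      case (Inl j) then have "ld l i = 1" "i = j" using True by (auto simp: ld_def idx_def)
      then show ?thesis using Inl True zmul_succ[of "ev w i" "b i"] by (simp add: letter_deg_def add.commute)
    next
      case (Inr j) then have "ld l i = -1" "i = j" using True by (auto simp: ld_def idx_def)
      then show ?thesis using Inr True zmul_pred[of "ev w i" "b i"]
        by (simp add: letter_deg_def algebra_simps)
    qed
  next
    case False then show ?thesis by (simp add: ld_other)
  qed
  have "Lin b (ev (l # w)) = (\<Sum>i\<in>S. zmul (ld l i + ev w i) (b i))"
    using Lin_super[OF fS s1, of b] by simp
  also have "\<dots> = (\<Sum>i\<in>S. (if i = idx l then letter_deg b l else 0)) + (\<Sum>i\<in>S. zmul (ev w i) (b i))"
    by (simp add: tm sum.distrib)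
  also have "(\<Sum>i\<in>S. (if i = idx l then letter_deg b l else 0)) = letter_deg b l"
    using fS by (simp add: S_def)
  also have "(\<Sum>i\<in>S. zmul (ev w i) (b i)) = Lin b (ev w)" using Lin_super[OF fS s2, of b] by simp
  finally show ?case using Cons.IH by (simp add: word_deg_cons)
qed

lemma free_basis_ev: fixes b :: "'i \<Rightarrow> 'g::ab_group_add" and w1 w2 :: "('i + 'i) list" assumes fb: "free_basis b" and d: "word_deg b w1 = word_deg b w2" shows "ev w1 = ev w2"
proof -
  have ex: "\<exists>!c :: 'i \<Rightarrow> int. finite {i. c i \<noteq> 0} \<and> word_deg b w1 = (\<Sum>i\<in>{i. c i \<noteq> 0}. zmul (c i) (b i))"
    using fb unfolding free_basis_def by (rule spec)
  have h1: "finite {i. ev w1 i \<noteq> 0} \<and> word_deg b w1 = (\<Sum>i\<in>{i. ev w1 i \<noteq> 0}. zmul (ev w1 i) (b i))"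
    using finite_ev word_deg_ev[of b w1] by (simp add: Lin_def)
  have h2: "finite {i. ev w2 i \<noteq> 0} \<and> word_deg b w1 = (\<Sum>i\<in>{i. ev w2 i \<noteq> 0}. zmul (ev w2 i) (b i))"
    using finite_ev word_deg_ev[of b w2] d by (simp add: Lin_def)
  define P where "P c = (finite {i. c i \<noteq> 0} \<and> word_deg b w1 = (\<Sum>i\<in>{i. c i \<noteq> 0}. zmul (c i) (b i)))" for c :: "'i \<Rightarrow> int"
  have "\<exists>!c. P c" "P (ev w1)" "P (ev w2)" using ex h1 h2 by (simp_all add: P_def)
  then show ?thesis using the1_equality[of P] by metis
qed

lemma (in qctx) deg_eqv: "free_basis b \<Longrightarrow> word_deg b w1 = word_deg b w2 \<Longrightarrow> eqv w1 w2"
  by (rule same_ev) (rule free_basis_ev)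

lemma word_deg_append: "word_deg b (u @ w) = word_deg b u + word_deg b w"
  by (simp add: word_deg_def)

lemma word_deg_rep_l: "word_deg b (replicate n (Inl i)) = natmul n (b i)"
  by (induction n) (simp_all add: word_deg_def letter_deg_def natmul_Suc)
lemma word_deg_rep_r: "word_deg b (replicate n (Inr i)) = - natmul n (b i)"
  by (induction n) (simp_all add: word_deg_def letter_deg_def natmul_Suc)

lemma word_deg_pw: "word_deg b (pw i k) = zmul k (b i)"
  by (simp add: pw_def zmul_def word_deg_rep_l word_deg_rep_r)

lemma word_deg_concat: "word_deg b (concat ws) = (\<Sum>w\<leftarrow>ws. word_deg b w)"
  by (induction ws) (simp_all add: word_deg_append word_deg_def)

lemma word_exists:
  fixes b :: "'i \<Rightarrow> 'g::ab_group_add"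
  assumes fb: "free_basis b" shows "\<exists>m. word_deg b m = s"
proof -
  obtain c :: "'i \<Rightarrow> int" where c: "finite {i. c i \<noteq> 0}" "s = (\<Sum>i\<in>{i. c i \<noteq> 0}. zmul (c i) (b i))"
    using fb unfolding free_basis_def by blast
  obtain L where L: "set L = {i. c i \<noteq> 0}" "distinct L" using finite_distinct_list[OF c(1)] by blast
  have "word_deg b (can L c) = (\<Sum>i\<leftarrow>L. zmul (c i) (b i))"
    by (simp add: can_def word_deg_concat word_deg_pw comp_def)
  also have "\<dots> = (\<Sum>i\<in>set L. zmul (c i) (b i))" using L(2) by (rule sum_list_distinct_conv_sum_set)
  finally have "word_deg b (can L c) = s" using L(1) c(2) by simp
  then show ?thesis by blast
qed

lemma idl_inter: assumes "idl J" "idl K" shows "idl (J \<inter> K)"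
proof -
  have J1: "J \<subseteq> {f. fsupp f}" and J2: "(\<lambda>w. 0) \<in> J" and J3: "\<forall>f\<in>J. \<forall>g\<in>J. (\<lambda>w. f w + g w) \<in> J"
    and J4: "\<forall>c. \<forall>f\<in>J. (\<lambda>w. c * f w) \<in> J"
    and J5: "\<forall>f\<in>J. \<forall>g. fsupp g \<longrightarrow> free_mult g f \<in> J \<and> free_mult f g \<in> J"
    using assms(1) unfolding idl_def by auto
  have K2: "(\<lambda>w. 0) \<in> K" and K3: "\<forall>f\<in>K. \<forall>g\<in>K. (\<lambda>w. f w + g w) \<in> K"
    and K4: "\<forall>c. \<forall>f\<in>K. (\<lambda>w. c * f w) \<in> K"
    and K5: "\<forall>f\<in>K. \<forall>g. fsupp g \<longrightarrow> free_mult g f \<in> K \<and> free_mult f g \<in> K"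
    using assms(2) unfolding idl_def by auto
  show ?thesis unfolding idl_def
  proof (intro conjI ballI allI impI)
    show "J \<inter> K \<subseteq> {f. fsupp f}" using J1 by auto
    show "(\<lambda>w. 0) \<in> J \<inter> K" using J2 K2 by simp
    show "(\<lambda>w. f w + g w) \<in> J \<inter> K" if "f \<in> J \<inter> K" "g \<in> J \<inter> K" for f g
      using that J3 K3 by simp
    show "(\<lambda>w. c * f w) \<in> J \<inter> K" if "f \<in> J \<inter> K" for c f using that J4 K4 by simp
    show "free_mult g f \<in> J \<inter> K" if "f \<in> J \<inter> K" "fsupp g" for f g using that J5 K5 by simp
    show "free_mult f g \<in> J \<inter> K" if "f \<in> J \<inter> K" "fsupp g" for f g using that J5 K5 by simp
  qed
qed

context jt begin

definition zz :: "('i \<Rightarrow> 'g) \<Rightarrow> 'i \<Rightarrow> 'a" where "zz b i = v (b i)"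
definition zinv :: "('i \<Rightarrow> 'g) \<Rightarrow> 'i \<Rightarrow> 'a" where "zinv b i = (SOME y. zz b i * y = 1 \<and> y * zz b i = 1)"

lemma zz_inv: "zz b i * zinv b i = 1 \<and> zinv b i * zz b i = 1"
proof -
  have "\<exists>y. zz b i * y = 1 \<and> y * zz b i = 1" using hom_invt[OF v_in v_nz] by (simp add: invt_def zz_def)
  then show ?thesis unfolding zinv_def by (rule someI_ex)
qed

lemma zz_grad: "zz b i \<in> Agr (b i)" by (simp add: zz_def v_in)
lemma zinv_grad: "zinv b i \<in> Agr (- b i)" using zz_inv[of b i] by (intro inv_grad[OF zz_grad]) auto

definition mon :: "('i \<Rightarrow> 'g) \<Rightarrow> ('i + 'i) list \<Rightarrow> 'a" where
  "mon b w = prod_list (map (\<lambda>l. case l of Inl i \<Rightarrow> zz b i | Inr i \<Rightarrow> zinv b i) w)"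

lemma mon_Nil[simp]: "mon b [] = 1" by (simp add: mon_def)
lemma mon_append: "mon b (u @ w) = mon b u * mon b w" by (simp add: mon_def)

lemma mon_grad: "mon b w \<in> Agr (word_deg b w)"
proof (induction w)
  case Nil then show ?case by (simp add: word_deg_def one_grad)
next
  case (Cons l w)
  have "(case l of Inl i \<Rightarrow> zz b i | Inr i \<Rightarrow> zinv b i) \<in> Agr (letter_deg b l)"
    by (cases l) (simp_all add: letter_deg_def zz_grad zinv_grad)
  then have "(case l of Inl i \<Rightarrow> zz b i | Inr i \<Rightarrow> zinv b i) * mon b w \<in> Agr (letter_deg b l + word_deg b w)"
    using Cons.IH by (rule prod_grad)
  then show ?case by (simp add: mon_def word_deg_cons)
qed

lemma mon_invt: "invt (mon b w)"
proof (induction w)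
  case Nil then show ?case by (simp add: invt_def)
next
  case (Cons l w)
  have "invt (case l of Inl i \<Rightarrow> zz b i | Inr i \<Rightarrow> zinv b i)"
  proof (cases l)
    case (Inl a) then show ?thesis using zz_inv[of b a] unfolding invt_def by (intro exI[of _ "zinv b a"]) simp
  next
    case (Inr a) then show ?thesis using zz_inv[of b a] unfolding invt_def by (intro exI[of _ "zz b a"]) simp
  qed
  then have "invt ((case l of Inl i \<Rightarrow> zz b i | Inr i \<Rightarrow> zinv b i) * mon b w)"
    using Cons.IH by (rule invt_mult)
  then show ?case by (simp add: mon_def)
qed

lemma mon_nz: "mon b w \<noteq> 0" by (rule invt_nz[OF mon_invt])

lemma span2: assumes "x \<in> Agr s" "y \<in> Agr s" "y \<noteq> 0" shows "\<exists>c. x = sc c y"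
proof -
  obtain c1 where c1: "x = sc c1 (v s)" using v_span assms(1) by blast
  obtain c2 where c2: "y = sc c2 (v s)" using v_span assms(2) by blast
  have "c2 \<noteq> 0" using c2 assms(3) by auto
  have "sc (c1 * inverse c2) y = sc (c1 * inverse c2 * c2) (v s)" by (simp add: c2 sc_multk)
  also have "\<dots> = x" using \<open>c2 \<noteq> 0\<close> c1 by (simp add: mult.assoc)
  finally have "x = sc (c1 * inverse c2) y" by simp
  then show ?thesis by blast
qed

definition qq :: "('i \<Rightarrow> 'g) \<Rightarrow> 'i \<Rightarrow> 'i \<Rightarrow> 'k" where
  "qq b i j = (SOME c. zz b i * zz b j = sc c (zz b j * zz b i))"

lemma zz_nz: "zz b i \<noteq> 0" by (simp add: zz_def v_nz)

lemma qq_prop: "zz b i * zz b j = sc (qq b i j) (zz b j * zz b i)"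
proof -
  have a: "zz b i * zz b j \<in> Agr (b i + b j)" by (simp add: prod_grad zz_grad)
  have "zz b j * zz b i \<in> Agr (b j + b i)" by (simp add: prod_grad zz_grad)
  then have bb: "zz b j * zz b i \<in> Agr (b i + b j)" by (simp add: add.commute)
  have "zz b j * zz b i \<noteq> 0" by (rule nz_prod[OF zz_grad zz_nz zz_grad zz_nz])
  then have "\<exists>c. zz b i * zz b j = sc c (zz b j * zz b i)" using span2[OF a bb] by blast
  then show ?thesis unfolding qq_def by (rule someI_ex)
qed

lemma qq_quantum: "quantum_matrix (qq b)"
  unfolding quantum_matrix_def
proof (intro conjI allI)
  fix i j
  show "qq b i j \<noteq> 0"
  proof
    assume "qq b i j = 0"
    then have "zz b i * zz b j = 0" using qq_prop[of b i j] by simp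
    then show False using nz_prod[OF zz_grad zz_nz zz_grad zz_nz, of b i b j] by simp
  qed
next
  fix i
  have "sc (qq b i i) (zz b i * zz b i) = sc 1 (zz b i * zz b i)" using qq_prop[of b i i] by simp
  then show "qq b i i = 1" by (rule sc_cancel[OF nz_prod[OF zz_grad zz_nz zz_grad zz_nz]])
next
  fix i j
  have "zz b i * zz b j = sc (qq b i j * qq b j i) (zz b i * zz b j)"
    using qq_prop[of b i j] qq_prop[of b j i] by (simp add: sc_multk)
  then have "sc (qq b i j * qq b j i) (zz b i * zz b j) = sc 1 (zz b i * zz b j)" by simp
  then have "qq b i j * qq b j i = 1" by (rule sc_cancel[OF nz_prod[OF zz_grad zz_nz zz_grad zz_nz]])
  then show "qq b i j = inverse (qq b j i)" using inverse_unique[of "qq b j i" "qq b i j"] by (simp add: mult.commute)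
qed

abbreviation FE where "FE b \<equiv> free_eval sc (zz b) (zinv b)"

lemma FE_def': "FE b f = (\<Sum>w\<in>{w. f w \<noteq> 0}. sc (f w) (mon b w))"
  by (simp add: free_eval_def mon_def)

lemma FE_super: "finite W \<Longrightarrow> {w. f w \<noteq> 0} \<subseteq> W \<Longrightarrow> FE b f = (\<Sum>w\<in>W. sc (f w) (mon b w))"
  unfolding FE_def' by (rule sum.mono_neutral_left) auto

lemma FE_lin: assumes "fsupp f" "fsupp g" shows "FE b (\<lambda>w. f w + c * g w) = FE b f + sc c (FE b g)"
proof -
  let ?W = "{w. f w \<noteq> 0} \<union> {w. g w \<noteq> 0}"
  have fW: "finite ?W" using assms by (simp add: fsupp_def)
  have "FE b (\<lambda>w. f w + c * g w) = (\<Sum>w\<in>?W. sc (f w + c * g w) (mon b w))"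
    by (rule FE_super[OF fW]) auto
  also have "\<dots> = (\<Sum>w\<in>?W. sc (f w) (mon b w)) + sc c (\<Sum>w\<in>?W. sc (g w) (mon b w))"
    by (simp add: sc_addk sc_multk sc_sum_v sum.distrib)
  also have "(\<Sum>w\<in>?W. sc (f w) (mon b w)) = FE b f" by (rule FE_super[OF fW, symmetric]) auto
  also have "(\<Sum>w\<in>?W. sc (g w) (mon b w)) = FE b g" by (rule FE_super[OF fW, symmetric]) auto
  finally show ?thesis .
qed

lemma FE_sc: assumes "fsupp f" shows "FE b (\<lambda>w. c * f w) = sc c (FE b f)"
proof -
  have "FE b (\<lambda>w. c * f w) = (\<Sum>w\<in>{w. f w \<noteq> 0}. sc (c * f w) (mon b w))"
    by (rule FE_super) (use assms in \<open>auto simp: fsupp_def\<close>)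
  then show ?thesis by (simp add: FE_def' sc_multk sc_sum_v)
qed

lemma FE_zero: "FE b (\<lambda>w. 0) = 0" by (simp add: FE_def')

lemma FE_dl: "FE b (dl a) = mon b a"
proof -
  have "FE b (dl a) = (\<Sum>w\<in>{a}. sc (dl a w) (mon b w))" by (rule FE_super) (auto simp: dl_def)
  then show ?thesis by (simp add: dl_def)
qed

lemma supp_free_mult: "{w. free_mult f g w \<noteq> 0} \<subseteq> (\<lambda>p. fst p @ snd p) ` ({u. f u \<noteq> 0} \<times> {v. g v \<noteq> 0})"
proof
  fix w assume "w \<in> {w. free_mult f g w \<noteq> 0}"
  then have "(\<Sum>u\<in>{u. f u \<noteq> 0}. \<Sum>v\<in>{v. g v \<noteq> 0}. if u @ v = w then f u * g v else 0) \<noteq> 0"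
    by (simp add: free_mult_def)
  then obtain u where "u \<in> {u. f u \<noteq> 0}" "(\<Sum>v\<in>{v. g v \<noteq> 0}. if u @ v = w then f u * g v else 0) \<noteq> 0"
    using sum.not_neutral_contains_not_neutral by blast
  then obtain v' where "v' \<in> {v. g v \<noteq> 0}" "(if u @ v' = w then f u * g v' else 0) \<noteq> 0"
    using sum.not_neutral_contains_not_neutral by blast
  then show "w \<in> (\<lambda>p. fst p @ snd p) ` ({u. f u \<noteq> 0} \<times> {v. g v \<noteq> 0})"
    using \<open>u \<in> _\<close> by (auto split: if_splits intro!: image_eqI[of _ _ "(u, v')"])
qed

lemma FE_mult: assumes ff: "fsupp f" and fg: "fsupp g" shows "FE b (free_mult f g) = FE b f * FE b g"
proof -
  define Sf where "Sf = {u. f u \<noteq> 0}"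
  define Sg where "Sg = {u. g u \<noteq> 0}"
  have fSf: "finite Sf" "finite Sg" using ff fg by (auto simp: fsupp_def Sf_def Sg_def)
  define W where "W = (\<lambda>p. fst p @ snd p) ` (Sf \<times> Sg)"
  have fW: "finite W" using fSf by (simp add: W_def)
  have sW: "{w. free_mult f g w \<noteq> 0} \<subseteq> W" using supp_free_mult[of f g] by (simp add: W_def Sf_def Sg_def)
  have inW: "u @ v \<in> W" if "u \<in> Sf" "v \<in> Sg" for u v
    using that unfolding W_def by (auto intro!: image_eqI[of _ _ "(u, v)"])
  have "FE b (free_mult f g) = (\<Sum>w\<in>W. sc (free_mult f g w) (mon b w))" by (rule FE_super[OF fW sW])
  also have "\<dots> = (\<Sum>w\<in>W. \<Sum>u\<in>Sf. \<Sum>v\<in>Sg. if u @ v = w then sc (f u * g v) (mon b w) else 0)"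
    unfolding free_mult_def Sf_def[symmetric] Sg_def[symmetric]
    by (intro sum.cong refl) (simp add: sc_sum_k if_distrib[of "\<lambda>c. sc c _"] cong: if_cong)
  also have "\<dots> = (\<Sum>u\<in>Sf. \<Sum>v\<in>Sg. \<Sum>w\<in>W. if u @ v = w then sc (f u * g v) (mon b w) else 0)"
    by (subst sum.swap) (subst (2) sum.swap, rule refl)
  also have "\<dots> = (\<Sum>u\<in>Sf. \<Sum>v\<in>Sg. sc (f u * g v) (mon b (u @ v)))"
    using fW inW by (intro sum.cong refl) simp
  also have "\<dots> = (\<Sum>u\<in>Sf. \<Sum>v\<in>Sg. sc (f u) (mon b u) * sc (g v) (mon b v))"
    by (simp add: sc_mult_mult mon_append)
  also have "\<dots> = (\<Sum>u\<in>Sf. sc (f u) (mon b u)) * (\<Sum>v\<in>Sg. sc (g v) (mon b v))"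
    by (subst sum_distrib_right) (simp add: sum_distrib_left)
  also have "\<dots> = FE b f * FE b g" by (simp add: FE_def' Sf_def Sg_def)
  finally show ?thesis .
qed

end

context jt begin

definition Ker :: "('i \<Rightarrow> 'g) \<Rightarrow> (('i + 'i) list \<Rightarrow> 'k) set" where
  "Ker b = {f. fsupp f \<and> FE b f = 0}"

lemma sc_neg: "sc (- c) x = - sc c x" by (simp add: sc_e e_uminus)

lemma K_idl: fixes b :: "'i \<Rightarrow> 'g" shows "idl (Ker b)"
  unfolding idl_def Ker_def
proof (intro conjI ballI allI impI)
  show "{f. fsupp f \<and> FE b f = 0} \<subseteq> {f. fsupp f}" by auto
  show "(\<lambda>w. 0) \<in> {f. fsupp f \<and> FE b f = 0}" by (simp add: fsupp_zero FE_zero)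
next
  fix f g assume f: "f \<in> {f. fsupp f \<and> FE b f = 0}" and g: "g \<in> {f. fsupp f \<and> FE b f = 0}"
  have "FE b (\<lambda>w. f w + 1 * g w) = 0" using f g FE_lin[of f g b 1] by simp
  moreover have "fsupp (\<lambda>w. f w + 1 * g w)" using f g fsupp_lin by blast
  ultimately show "(\<lambda>w. f w + g w) \<in> {f. fsupp f \<and> FE b f = 0}" by simp
next
  fix c f assume f: "f \<in> {f. fsupp f \<and> FE b f = 0}"
  have "fsupp (\<lambda>w. 0 + c * f w)" using f fsupp_lin[OF fsupp_zero] by blast
  moreover have "FE b (\<lambda>w. c * f w) = 0" using f FE_sc[of f b c] by simp
  ultimately show "(\<lambda>w. c * f w) \<in> {f. fsupp f \<and> FE b f = 0}" by simp
next
  fix f and g :: "('i + 'i) list \<Rightarrow> 'k" assume f: "f \<in> {f. fsupp f \<and> FE b f = 0}" and g: "fsupp g"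
  show "free_mult g f \<in> {f. fsupp f \<and> FE b f = 0}" using f g by (simp add: fsupp_free_mult FE_mult)
  show "free_mult f g \<in> {f. fsupp f \<and> FE b f = 0}" using f g by (simp add: fsupp_free_mult FE_mult)
qed

lemma rel_in_K:
  assumes "(\<lambda>w. dl a w + (- c) * dl a' w) = r" "mon b a = sc c (mon b a')"
  shows "r \<in> Ker b"
proof -
  have "fsupp r" unfolding assms(1)[symmetric] by (rule fsupp_lin[OF fsupp_dl fsupp_dl])
  moreover have "FE b r = 0"
    unfolding assms(1)[symmetric] FE_lin[OF fsupp_dl[of a] fsupp_dl[of a'], of b "- c"]
    using assms(2) by (simp add: FE_dl sc_neg)
  ultimately show ?thesis by (simp add: Ker_def)
qed

lemma R_K: "qt_relations (qq b) \<subseteq> Ker b"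
proof
  fix r assume "r \<in> qt_relations (qq b)"
  then have "r \<in> {(\<lambda>w. (if w = [Inl i, Inl j] then 1 else 0) - (if w = [Inl j, Inl i] then qq b i j else 0)) | i j. True}
     \<or> r \<in> {(\<lambda>w. (if w = [Inl i, Inr i] then 1 else 0) - (if w = [] then 1 else 0)) | i. True}
     \<or> r \<in> {(\<lambda>w. (if w = [Inr i, Inl i] then 1 else 0) - (if w = [] then 1 else 0)) | i. True}"
    unfolding qt_relations_def by simp
  then show "r \<in> Ker b"
  proof (elim disjE)
    assume "r \<in> {(\<lambda>w. (if w = [Inl i, Inl j] then 1 else 0) - (if w = [Inl j, Inl i] then qq b i j else 0)) | i j. True}"
    then obtain i j where a: "r = (\<lambda>w. (if w = [Inl i, Inl j] then 1 else 0) - (if w = [Inl j, Inl i] then qq b i j else 0))"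
      by auto
    show ?thesis
      by (rule rel_in_K[of "[Inl i, Inl j]" "qq b i j" "[Inl j, Inl i]"])
         (auto simp: a dl_def mon_def qq_prop[of b i j])
  next
    assume "r \<in> {(\<lambda>w. (if w = [Inl i, Inr i] then 1 else 0) - (if w = [] then 1 else 0)) | i. True}"
    then obtain i where b: "r = (\<lambda>w. (if w = [Inl i, Inr i] then 1 else 0) - (if w = [] then 1 else 0))"
      by auto
    show ?thesis
      by (rule rel_in_K[of "[Inl i, Inr i]" 1 "[]"]) (auto simp: b dl_def mon_def zz_inv)
  next
    assume "r \<in> {(\<lambda>w. (if w = [Inr i, Inl i] then 1 else 0) - (if w = [] then 1 else 0)) | i. True}"
    then obtain i where c: "r = (\<lambda>w. (if w = [Inr i, Inl i] then 1 else 0) - (if w = [] then 1 else 0))"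
      by auto
    show ?thesis
      by (rule rel_in_K[of "[Inr i, Inl i]" 1 "[]"]) (auto simp: c dl_def mon_def zz_inv)
  qed
qed

lemma dist_zero:
  assumes fM: "finite M" and inj: "inj_on d M" and T: "\<And>m. m \<in> M \<Longrightarrow> T m \<in> Agr (d m)"
    and z: "(\<Sum>m\<in>M. T m) = 0" and m0: "m0 \<in> M"
  shows "T m0 = 0"
proof -
  have "comp (\<Sum>m\<in>M. T m) (d m0) = (\<Sum>m\<in>M. if d m = d m0 then T m else 0)"
    by (rule comp_sum_gen[OF fM T])
  also have "\<dots> = (\<Sum>m\<in>M. if m = m0 then T m else 0)"
    using inj m0 by (intro sum.cong refl) (auto dest: inj_onD)
  also have "\<dots> = T m0" using fM m0 by simp
  finally show ?thesis using z by simp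
qed

end

context jt begin

lemma ker_in_J:
  fixes b :: "'i \<Rightarrow> 'g"
  assumes fb: "free_basis b" and J: "idl J" and RJ: "qt_relations (qq b) \<subseteq> J" and f: "f \<in> Ker b"
  shows "f \<in> J"
proof -
  define J' where "J' = J \<inter> Ker b"
  have idl': "idl J'" using idl_inter[OF J K_idl] by (simp add: J'_def)
  have R': "qt_relations (qq b) \<subseteq> J'" using RJ R_K by (auto simp: J'_def)
  have qnz: "qq b i j \<noteq> 0" for i j using qq_quantum[of b] unfolding quantum_matrix_def by blast
  interpret Q: qctx J' "qq b" by (rule qctx.intro[OF idl' R' qnz])
  have J'K: "J' \<subseteq> Ker b" by (simp add: J'_def)
  define W where "W = {w. f w \<noteq> 0}"
  have fW: "finite W" using f by (simp add: Ker_def fsupp_def W_def)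
  have ff: "fsupp f" using f by (simp add: Ker_def)
  have FEf: "FE b f = 0" using f by (simp add: Ker_def)
  define r where "r w = (SOME w'. w' \<in> W \<and> word_deg b w' = word_deg b w)" for w
  have r: "r w \<in> W \<and> word_deg b (r w) = word_deg b w" if "w \<in> W" for w
    unfolding r_def by (rule someI[of _ w]) (simp add: that)
  have eq: "Q.eqv w (r w)" if "w \<in> W" for w using Q.deg_eqv[OF fb] r[OF that] by simp
  define k where "k w = (SOME k. k \<noteq> 0 \<and> (\<lambda>u. dl w u - k * dl (r w) u) \<in> J')" for w
  have k: "(\<lambda>u. dl w u - k w * dl (r w) u) \<in> J'" if "w \<in> W" for w
  proof -
    have "k w \<noteq> 0 \<and> (\<lambda>u. dl w u - k w * dl (r w) u) \<in> J'"
      unfolding k_def by (rule someI_ex) (use eq[OF that] in \<open>simp add: Q.eqv_def\<close>)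
    then show ?thesis by simp
  qed
  define F1 where "F1 = (\<lambda>u. \<Sum>w\<in>W. f w * (dl w u - k w * dl (r w) u))"
  have F1J: "F1 \<in> J'"
    unfolding F1_def
  proof (rule Q.J_sum[OF fW, of "\<lambda>w u. f w * (dl w u - k w * dl (r w) u)", simplified])
    fix w assume "w \<in> W"
    then show "(\<lambda>u. f w * (dl w u - k w * dl (r w) u)) \<in> J'" by (rule Q.J_sc[OF k])
  qed
  define G where "G = (\<lambda>u. \<Sum>w\<in>W. f w * k w * dl (r w) u)"
  have fsum: "f u = F1 u + G u" for u
  proof -
    have "(\<Sum>w\<in>W. f w * dl w u) = (\<Sum>w\<in>W. if w = u then f w else 0)"
      by (intro sum.cong refl) (simp add: dl_def)
    also have "\<dots> = f u" using fW by (simp add: W_def)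
    finally have "f u = (\<Sum>w\<in>W. f w * dl w u)" by simp
    also have "\<dots> = (\<Sum>w\<in>W. f w * (dl w u - k w * dl (r w) u) + f w * k w * dl (r w) u)"
      by (intro sum.cong refl) (simp add: algebra_simps)
    finally show ?thesis by (simp add: F1_def G_def sum.distrib)
  qed
  have F1K: "F1 \<in> Ker b" using F1J J'K by blast
  then have fF1: "fsupp F1" and FEF1: "FE b F1 = 0" by (auto simp: Ker_def)
  have Geq: "G = (\<lambda>u. f u + (- 1) * F1 u)" using fsum by (auto simp: fun_eq_iff)
  have fG: "fsupp G" unfolding Geq by (rule fsupp_lin[OF ff fF1])
  have FEG: "FE b G = 0" unfolding Geq FE_lin[OF ff fF1] using FEf FEF1 by simp
  define M where "M = r ` W"
  have fM: "finite M" using fW by (simp add: M_def)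
  have suppG: "{u. G u \<noteq> 0} \<subseteq> M"
  proof
    fix u assume "u \<in> {u. G u \<noteq> 0}"
    then have "(\<Sum>w\<in>W. f w * k w * dl (r w) u) \<noteq> 0" by (simp add: G_def)
    then obtain w where "w \<in> W" "f w * k w * dl (r w) u \<noteq> 0"
      using sum.not_neutral_contains_not_neutral by blast
    then show "u \<in> M" by (auto simp: M_def dl_def split: if_splits)
  qed
  have "FE b G = (\<Sum>m\<in>M. sc (G m) (mon b m))" by (rule FE_super[OF fM suppG])
  then have sumz: "(\<Sum>m\<in>M. sc (G m) (mon b m)) = 0" using FEG by simp
  have inj: "inj_on (word_deg b) M"
  proof (rule inj_onI)
    fix m1 m2 assume "m1 \<in> M" "m2 \<in> M" and d: "word_deg b m1 = word_deg b m2"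
    then obtain w1 w2 where w: "w1 \<in> W" "w2 \<in> W" "m1 = r w1" "m2 = r w2" by (auto simp: M_def)
    then have "word_deg b w1 = word_deg b w2" using r[OF w(1)] r[OF w(2)] d by simp
    then show "m1 = m2" using w by (simp add: r_def)
  qed
  have Gz: "G m = 0" for m
  proof (cases "m \<in> M")
    case True
    have "sc (G m) (mon b m) = 0"
      by (rule dist_zero[OF fM inj _ sumz True]) (simp add: sub_sc mon_grad)
    then have "sc (G m) (mon b m) = sc 0 (mon b m)" by simp
    then show ?thesis by (rule sc_cancel[OF mon_nz])
  next
    case False then show ?thesis using suppG by blast
  qed
  have "f = F1" using fsum Gz by (auto simp: fun_eq_iff)
  then show ?thesis using F1J by (simp add: J'_def)
qed

lemma FE_deg:
  fixes b :: "'i \<Rightarrow> 'g"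
  assumes fb: "free_basis b" shows "FE b ` free_deg b s = Agr s"
proof
  show "FE b ` free_deg b s \<subseteq> Agr s"
  proof
    fix x assume "x \<in> FE b ` free_deg b s"
    then obtain f where f: "f \<in> free_deg b s" "x = FE b f" by blast
    have "FE b f \<in> Agr s" unfolding FE_def'
    proof (rule sub_sum)
      show "finite {w. f w \<noteq> 0}" using f by (simp add: free_deg_def fsupp_def)
      fix w assume "w \<in> {w. f w \<noteq> 0}"
      then have "word_deg b w = s" using f by (simp add: free_deg_def)
      then show "sc (f w) (mon b w) \<in> Agr s" using sub_sc[OF mon_grad[of b w]] by simp
    qed
    then show "x \<in> Agr s" using f by simp
  qed
next
  show "Agr s \<subseteq> FE b ` free_deg b s"
  proof
    fix x assume x: "x \<in> Agr s"
    obtain m where m: "word_deg b m = s" using word_exists[OF fb] by blast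
    have mg: "mon b m \<in> Agr s" using mon_grad[of b m] m by simp
    obtain c where c: "x = sc c (mon b m)" using span2[OF x mg mon_nz] by blast
    define f where "f = (\<lambda>w. c * dl m w)"
    have ff: "fsupp f" unfolding fsupp_def f_def
      by (rule finite_subset[of _ "{m}"]) (auto simp: dl_def)
    have "FE b f = x" unfolding f_def FE_sc[OF fsupp_dl] FE_dl c ..
    moreover have "f \<in> free_deg b s" using ff m by (auto simp: free_deg_def f_def dl_def)
    ultimately show "x \<in> FE b ` free_deg b s" by blast
  qed
qed

lemma FE_sum_img:
  fixes b :: "'i \<Rightarrow> 'g"
  shows "finite D \<Longrightarrow> (\<And>s. s \<in> D \<Longrightarrow> g s \<in> FE b ` {f. fsupp f}) \<Longrightarrow> (\<Sum>s\<in>D. g s) \<in> FE b ` {f. fsupp f}"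
proof (induction D rule: finite_induct)
  case empty
  show ?case by (rule image_eqI[of _ _ "\<lambda>w. 0"]) (simp_all add: FE_zero fsupp_zero)
next
  case (insert x D)
  have "g x \<in> FE b ` {f. fsupp f}" by (rule insert.prems) simp
  then obtain f1 where f1: "f1 \<in> {f. fsupp f}" "g x = FE b f1" by (rule imageE)
  have "(\<Sum>s\<in>D. g s) \<in> FE b ` {f. fsupp f}" by (rule insert.IH) (rule insert.prems, simp)
  then obtain f2 where f2: "f2 \<in> {f. fsupp f}" "(\<Sum>s\<in>D. g s) = FE b f2" by (rule imageE)
  have ff1: "fsupp f1" and ff2: "fsupp f2" using f1 f2 by auto
  have e: "FE b (\<lambda>w. f1 w + 1 * f2 w) = g x + (\<Sum>s\<in>D. g s)"
    unfolding FE_lin[OF ff1 ff2] f1(2) f2(2) by simp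
  have fs: "fsupp (\<lambda>w. f1 w + 1 * f2 w)" by (rule fsupp_lin[OF ff1 ff2])
  have "(\<Sum>s\<in>insert x D. g s) = g x + (\<Sum>s\<in>D. g s)" using insert.hyps by simp
  then show ?case using e fs by (metis (no_types, lifting) image_eqI mem_Collect_eq)
qed

lemma iso_quantum:
  fixes b :: "'i \<Rightarrow> 'g"
  assumes fb: "free_basis b" shows "graded_iso_quantum_torus sc Agr b (qq b)"
proof -
  have deg: "FE b ` free_deg b s = Agr s" for s by (rule FE_deg[OF fb])
  have surj: "FE b ` {f. fsupp f} = UNIV"
  proof (intro set_eqI iffI)
    fix a :: 'a
    have "a = (\<Sum>\<sigma>\<in>{\<sigma>. comp a \<sigma> \<noteq> 0}. comp a \<sigma>)" by (rule comp_sum)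
    moreover have "(\<Sum>\<sigma>\<in>{\<sigma>. comp a \<sigma> \<noteq> 0}. comp a \<sigma>) \<in> FE b ` {f. fsupp f}"
    proof (rule FE_sum_img[OF comp_fin])
      fix s
      have "comp a s \<in> FE b ` free_deg b s" using deg comp_in by blast
      moreover have "free_deg b s \<subseteq> {f. fsupp f}" by (auto simp: free_deg_def)
      ultimately show "comp a s \<in> FE b ` {f. fsupp f}" by blast
    qed
    ultimately show "a \<in> FE b ` {f. fsupp f}" by simp
  qed simp
  have ker: "{f. fsupp f \<and> FE b f = 0} = free_ideal (qt_relations (qq b))"
    unfolding free_ideal_alt
  proof
    show "{f. fsupp f \<and> FE b f = 0} \<subseteq> \<Inter> {J. idl J \<and> qt_relations (qq b) \<subseteq> J}"
    proof
      fix f assume "f \<in> {f. fsupp f \<and> FE b f = 0}"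
      then have "f \<in> Ker b" by (simp add: Ker_def)
      then show "f \<in> \<Inter> {J. idl J \<and> qt_relations (qq b) \<subseteq> J}"
        using ker_in_J[OF fb] by blast
    qed
    have "Ker b \<in> {J. idl J \<and> qt_relations (qq b) \<subseteq> J}" using K_idl R_K by blast
    then show "\<Inter> {J. idl J \<and> qt_relations (qq b) \<subseteq> J} \<subseteq> {f. fsupp f \<and> FE b f = 0}"
      unfolding Ker_def by blast
  qed
  show ?thesis unfolding graded_iso_quantum_torus_def
    by (intro exI[of _ "zz b"] exI[of _ "zinv b"] conjI allI surj ker deg)
qed

end

theorem lemma1p10:
  fixes sc :: "'k::field_char_0 \<Rightarrow> 'a::ring_1 \<Rightarrow> 'a"
    and Agr :: "'g::ab_group_add \<Rightarrow> 'a set"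
  assumes "torsion_free TYPE('g)"
    and "is_algebra sc"
    and "jordan_torus sc Agr"
  shows "(\<exists>lam. cocycle lam \<and> graded_iso_twisted sc Agr lam) \<and>
         (\<forall>b :: 'i::linorder \<Rightarrow> 'g. free_basis b \<longrightarrow>
            (\<exists>q. quantum_matrix q \<and> graded_iso_quantum_torus sc Agr b q))"
proof -
  interpret jt sc Agr by (rule jt.intro[OF assms])
  show ?thesis
  proof (intro conjI allI impI)
    show "\<exists>lam. cocycle lam \<and> graded_iso_twisted sc Agr lam" using cocycle_lam iso_twisted by blast
  next
    fix b :: "'i \<Rightarrow> 'g" assume "free_basis b"
    then show "\<exists>q. quantum_matrix q \<and> graded_iso_quantum_torus sc Agr b q"
      using qq_quantum iso_quantum by blast
  qed
qed

end
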